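(* Let $\gamma\in(0,2)$, $d\ge1$ and $G\in\mathscr S^d_{\gamma,0}$. Then there exist $H^G_2\in L^1(\mathbb R^d)$ and a constant $C_2=C_2(G)>0$ such that for all $\hat u\in\mathbb R^d$, $$\sup_{s\in[0,T]}|\Delta^{\gamma/2}_\star G_s(\hat u)|\le H^G_2(\hat u)\le C_2\big(1+|u_d|^{-\gamma/2}\big)$$ (the right-hand side being $+\infty$ when $u_d=0$).
   Context: Fix $T>0$; $c_\gamma>0$ with $\sum_{\hat z\ne0}c_\gamma|\hat z|^{-d-\gamma}=1$. Write $\hat u=(\hat u_\star,u_d)$, $\mathbb R^{d\star}_\pm=\mathbb R^{d-1}\times\{\pm u_d>0\}$. For open $\mathcal O$: $\Delta^{\gamma/2}_{\mathcal O}G(\hat u)=\mathbb 1_{\mathcal O}(\hat u)c_\gamma\lim_{\varepsilon\to0^+}\int_{\mathcal O\cap\{|\hat v-\hat u|\ge\varepsilon\}}\frac{G(\hat u)-G(\hat v)}{|\hat v-\hat u|^{d+\gamma}}\mathrm d\hat v$, and $\Delta^{\gamma/2}_\star=\Delta^{\gamma/2}_{\mathbb R^{d\star}_-}+\Delta^{\gamma/2}_{\mathbb R^{d\star}_+}$. For $k\in\mathbb N$, $\mathscr S^k(\mathbb R^d)$ is the set of continuous $G:[0,\infty)\times\mathbb R^d\to\mathbb R$ whose spatial partial derivatives up to order $k$ exist and are continuous, with $\sup_{(s,\hat u)\in[0,T]\times\mathbb R^d}|\hat u|^r[G_s]_j(\hat u)<\infty$ for all $r\in\mathbb N$, $j\le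 k$, where $[G_s]_j=|G_s|+\sum_{m=1}^j\sum_{i_1,\dots,i_m}|\partial_{i_1}\cdots\partial_{i_m}G_s|$. $\mathscr S^k_c(\mathbb R^d)$: those vanishing, for all $s\in[0,T]$, outside some compact set. $\mathscr S^d_\gamma=\mathscr S^2_c(\mathbb R^d)$ if $\gamma\in(0,1]$ or $d\ge2$, $\mathscr S^2(\mathbb R)$ if $d=1,\gamma\in(1,2)$. $\mathscr S^d_{\gamma,0}$: functions $G:[0,T]\times\mathbb R^d\to\mathbb R$ for which there are $G^\pm\in\mathscr S^d_\gamma$ with $G_s(\hat u)=\mathbb 1_{u_d<0}G^-_s(\hat u)+\mathbb 1_{u_d\ge0}G^+_s(\hat u)$ for all $s,\hat u$. *)

theory Defs
  imports "HOL-Analysis.Analysis"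
begin

text \<open>Space R^d is modelled as real^'n with d = CARD('n); the distinguished
  ("last") coordinate u_d is a fixed index k :: 'n.\<close>

definition c_gamma :: "real \<Rightarrow> ('n::finite) itself \<Rightarrow> real" where
  "c_gamma \<gamma> _ = inverse (infsum (\<lambda>z::real^'n. norm z powr (- (real CARD('n) + \<gamma>)))
      {z. (\<forall>i. z $ i \<in> \<int>) \<and> z \<noteq> 0})"

definition pd :: "'n::finite \<Rightarrow> (real^'n \<Rightarrow> real) \<Rightarrow> real^'n \<Rightarrow> real" where
  "pd i f u = deriv (\<lambda>t. f (u + t *\<^sub>R axis i 1)) 0"

fun pdl :: "'n::finite list \<Rightarrow> (real^'n \<Rightarrow> real) \<Rightarrow> real^'n \<Rightarrow> real" where
  "pdl [] f = f"
| "pdl (i # is) f = pd i (pdl is f)"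

definition bracket :: "nat \<Rightarrow> (real^'n::finite \<Rightarrow> real) \<Rightarrow> real^'n \<Rightarrow> real" where
  "bracket j f u = (\<Sum>m\<le>j. \<Sum>is\<in>{is :: 'n list. length is = m}. \<bar>pdl is f u\<bar>)"

definition S_k :: "real \<Rightarrow> nat \<Rightarrow> (real \<Rightarrow> real^'n::finite \<Rightarrow> real) set" where
  "S_k T k = {G.
     continuous_on ({0..} \<times> UNIV) (\<lambda>(s,u). G s u)
   \<and> (\<forall>is i s u. length is < k \<and> s \<ge> 0 \<longrightarrow>
          (\<lambda>t. pdl is (G s) (u + t *\<^sub>R axis i 1)) differentiable (at 0))
   \<and> (\<forall>is. length is \<le> k \<longrightarrow> continuous_on ({0..} \<times> UNIV) (\<lambda>(s,u). pdl is (G s) u))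
   \<and> (\<forall>r::nat. \<forall>j\<le>k. bdd_above ((\<lambda>(s,u). norm u ^ r * bracket j (G s) u) ` ({0..T} \<times> UNIV)))}"

definition S_k_c :: "real \<Rightarrow> nat \<Rightarrow> (real \<Rightarrow> real^'n::finite \<Rightarrow> real) set" where
  "S_k_c T k = {G \<in> S_k T k. \<exists>K. compact K \<and> (\<forall>s\<in>{0..T}. \<forall>u. u \<notin> K \<longrightarrow> G s u = 0)}"

definition S_gamma :: "real \<Rightarrow> real \<Rightarrow> (real \<Rightarrow> real^'n::finite \<Rightarrow> real) set" where
  "S_gamma T \<gamma> = (if \<gamma> \<le> 1 \<or> CARD('n) \<ge> 2 then S_k_c T 2 else S_k T 2)"

definition S_gamma_0 :: "real \<Rightarrow> real \<Rightarrow> 'n::finite \<Rightarrow> (real \<Rightarrow> real^'n \<Rightarrow> real) set" where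
  "S_gamma_0 T \<gamma> k = {G. \<exists>Gm Gp. Gm \<in> S_gamma T \<gamma> \<and> Gp \<in> S_gamma T \<gamma> \<and>
      (\<forall>s\<in>{0..T}. \<forall>u. G s u = (if u $ k < 0 then Gm s u else Gp s u))}"

definition reg_frac_lap :: "real \<Rightarrow> (real^'n::finite) set \<Rightarrow> (real^'n \<Rightarrow> real) \<Rightarrow> real^'n \<Rightarrow> real" where
  "reg_frac_lap \<gamma> D g u = indicator D u * c_gamma \<gamma> TYPE('n) *
     Lim (at_right 0) (\<lambda>\<epsilon>. set_lebesgue_integral lborel (D \<inter> {v. norm (v - u) \<ge> \<epsilon>})
         (\<lambda>v. (g u - g v) / norm (v - u) powr (real CARD('n) + \<gamma>)))"

definition star_frac_lap :: "real \<Rightarrow> 'n::finite \<Rightarrow> (real^'n \<Rightarrow> real) \<Rightarrow> real^'n \<Rightarrow> real" where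
  "star_frac_lap \<gamma> k g u = reg_frac_lap \<gamma> {v. v $ k < 0} g u + reg_frac_lap \<gamma> {v. v $ k > 0} g u"

end

theory Submission
  imports Defs "HOL-Real_Asymp.Real_Asymp"
begin

lemma int_half_tail:
  fixes q :: real assumes q: "q > 1"
  shows "integrable lborel (\<lambda>x::real. (1+x) powr -q * indicator {0..} x)"
proof (rule integrableI_nonneg)
  show "(\<lambda>x::real. (1+x) powr -q * indicator {0..} x) \<in> borel_measurable lborel" by measurable
  show "AE x in lborel. 0 \<le> (1+x) powr -q * indicator {0..} x" by (auto simp: indicator_def)
  define F where "F x = - ((1+x) powr (1-q)) / (q - 1)" for x :: real
  have "(\<integral>\<^sup>+x. ennreal ((1+x) powr -q) * indicator {0 ..} x \<partial>lborel) = 0 - F 0"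
  proof (rule nn_integral_FTC_atLeast)
    show "(\<lambda>x::real. (1+x) powr -q) \<in> borel_measurable borel" by measurable
    show "DERIV F x :> (1+x) powr -q" if "0 \<le> x" for x
    proof -
      have d1: "DERIV (\<lambda>x. (1+x) powr (1-q)) x :> (1-q) * (1+x) powr ((1-q) - of_nat 1) * 1"
        by (rule DERIV_fun_powr) (use that in \<open>auto intro!: derivative_eq_intros\<close>)
      have "DERIV (\<lambda>x. - ((1+x) powr (1-q)) / (q - 1)) x :> - ((1-q) * (1+x) powr ((1-q) - of_nat 1) * 1) / (q-1)"
        using DERIV_cdivide[OF DERIV_minus[OF d1], of "q-1"] by simp
      moreover have "- ((1-q) * (1+x) powr ((1-q) - of_nat 1) * 1) / (q-1) = (1+x) powr -q"
        using q by (simp add: field_simps)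
      ultimately show ?thesis unfolding F_def by simp
    qed
    show "0 \<le> (1+x) powr -q" for x :: real by simp
    show "(F \<longlongrightarrow> 0) at_top" unfolding F_def using q by real_asymp
  qed
  then show "(\<integral>\<^sup>+x. ennreal ((1+x) powr -q * indicator {0..} x) \<partial>lborel) < \<infinity>"
    by (simp add: indicator_mult_ennreal mult.commute)
qed

lemma int_1d_tail:
  fixes q :: real assumes q: "q > 1"
  shows "integrable lborel (\<lambda>x::real. (1+\<bar>x\<bar>) powr -q)"
proof -
  let ?f = "\<lambda>x::real. (1+x) powr -q * indicator {0..} x"
  have i1: "integrable lborel ?f" by (rule int_half_tail[OF q])
  have i2: "integrable lborel (\<lambda>x. ?f (0 + (-1) * x))"
    by (rule lborel_integrable_real_affine[OF i1]) simp
  have "integrable lborel (\<lambda>x. ?f x + ?f (0 + (-1) * x))" using i1 i2 by simp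
  moreover have "(\<lambda>x::real. (1+\<bar>x\<bar>) powr -q) \<in> borel_measurable lborel" by measurable
  moreover have "AE x in lborel. norm ((1+\<bar>x\<bar>) powr -q) \<le> norm (?f x + ?f (0 + (-1) * x))"
      by (auto simp: indicator_def)
  ultimately show ?thesis by (rule Bochner_Integration.integrable_bound)
qed

lemma int_half_sing:
  fixes c :: real assumes c: "0 \<le> c" "c < 1"
  shows "integrable lborel (\<lambda>x::real. x powr -c * indicator {0..1} x)"
proof (rule integrableI_nonneg)
  show "(\<lambda>x::real. x powr -c * indicator {0..1} x) \<in> borel_measurable lborel" by measurable
  show "AE x in lborel. 0 \<le> x powr -c * indicator {0..1} x" by (auto simp: indicator_def)
  have hI: "((\<lambda>x::real. x powr -c) has_integral (1 powr (-c+1) / (-c+1))) {0..1}"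
    by (rule has_integral_powr_from_0) (use c in auto)
  have "((\<lambda>x::real. x powr -c * indicator {0..1} x) has_integral (1 powr (-c+1) / (-c+1))) UNIV"
  proof -
    have "(\<lambda>x::real. x powr -c * indicator {0..1} x) = (\<lambda>x. if x \<in> {0..1} then x powr -c else 0)"
      by (auto simp: indicator_def)
    then show ?thesis using has_integral_restrict_UNIV[of "{0..1::real}" "\<lambda>x. x powr -c"] hI by simp
  qed
  then have "integral\<^sup>N lborel (\<lambda>x::real. x powr -c * indicator {0..1} x) = 1 powr (-c+1) / (-c+1)"
    by (intro nn_integral_has_integral_lborel) (auto simp: indicator_def)
  then show "(\<integral>\<^sup>+x. ennreal (x powr -c * indicator {0..1} x) \<partial>lborel) < \<infinity>" by simp
qed

lemma int_1d_sing:
  fixes c :: real assumes c: "0 \<le> c" "c < 1"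
  shows "integrable lborel (\<lambda>x::real. indicator {-1..1} x * \<bar>x\<bar> powr -c)"
proof -
  let ?f = "\<lambda>x::real. x powr -c * indicator {0..1} x"
  have i1: "integrable lborel ?f" by (rule int_half_sing[OF c])
  have i2: "integrable lborel (\<lambda>x. ?f (0 + (-1) * x))"
    by (rule lborel_integrable_real_affine[OF i1]) simp
  have "integrable lborel (\<lambda>x. ?f x + ?f (0 + (-1) * x))" using i1 i2 by simp
  moreover have "(\<lambda>x::real. indicator {-1..1} x * \<bar>x\<bar> powr -c) \<in> borel_measurable lborel" by measurable
  moreover have "AE x in lborel. norm (indicator {-1..1} x * \<bar>x\<bar> powr -c) \<le> norm (?f x + ?f (0 + (-1) * x))"
      by (auto simp: indicator_def)
  ultimately show ?thesis by (rule Bochner_Integration.integrable_bound)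
qed


lemma Basis_vec_range: "(Basis :: (real^'n::finite) set) = range (\<lambda>i. axis i 1)"
  by (auto simp: Basis_vec_def)

lemma inj_axis1: "inj (\<lambda>i::'n::finite. (axis i 1 :: real^'n))"
  by (auto simp: inj_on_def axis_eq_axis)

lemma prod_integrable_vec:
  fixes f :: "'n::finite \<Rightarrow> real \<Rightarrow> real"
  assumes int: "\<And>i. integrable lborel (f i)"
  shows "integrable lborel (\<lambda>x::real^'n. \<Prod>i\<in>UNIV. f i (x$i))"
proof -
  interpret finite_product_sigma_finite "\<lambda>_. lborel" "Basis :: (real^'n) set" by standard simp
  have fm[measurable]: "f i \<in> borel_measurable borel" for i
    using borel_measurable_integrable[OF int[of i]] by simp
  have "integrable (\<Pi>\<^sub>M b\<in>(Basis :: (real^'n) set). lborel) (\<lambda>\<phi>. \<Prod>b\<in>Basis. f (axis_index b) (\<phi> b))"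
    by (rule product_integrable_prod) (auto intro: int)
  moreover have "(\<Prod>b\<in>Basis. f (axis_index b) (\<phi> b)) = (\<Prod>i\<in>UNIV. f i ((\<Sum>b\<in>(Basis :: (real^'n) set). \<phi> b *\<^sub>R b)$i))"
    for \<phi> :: "real^'n \<Rightarrow> real"
  proof -
    have e: "((\<Sum>b\<in>(Basis :: (real^'n) set). \<phi> b *\<^sub>R b)$i) = \<phi> (axis i 1)" for i
    proof -
      have "(\<Sum>x\<in>UNIV. \<phi> (axis x 1) * axis x 1 $ i) = (\<Sum>x\<in>UNIV. if x = i then \<phi> (axis x 1) else 0)"
        by (rule sum.cong) (auto simp: axis_def)
      then show ?thesis unfolding Basis_vec_range sum.reindex[OF inj_axis1] o_def
        by (simp add: sum_component)
    qed
    show ?thesis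
      by (simp only: e) (simp add: Basis_vec_range prod.reindex[OF inj_axis1])
  qed
  ultimately have "integrable (\<Pi>\<^sub>M b\<in>(Basis :: (real^'n) set). lborel)
     (\<lambda>\<phi>. (\<lambda>x::real^'n. \<Prod>i\<in>UNIV. f i (x$i)) (\<Sum>b\<in>Basis. \<phi> b *\<^sub>R b))" by simp
  then have "integrable (distr (\<Pi>\<^sub>M b\<in>(Basis :: (real^'n) set). lborel) borel (\<lambda>\<phi>. \<Sum>b\<in>Basis. \<phi> b *\<^sub>R b))
     (\<lambda>x::real^'n. \<Prod>i\<in>UNIV. f i (x$i))"
    by (subst integrable_distr_eq) auto
  then show ?thesis by (simp add: lborel_eq[symmetric])
qed

lemma AE_vec_nonzero: "AE x in (lborel :: (real^'n::finite) measure). \<forall>i. x$i \<noteq> 0"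
proof -
  have "AE x in (lborel :: (real^'n::finite) measure). x \<bullet> axis i 1 \<noteq> 0" for i
    by (rule AE_lborel_inner_neq) (simp add: Basis_vec_range)
  then have "\<forall>i\<in>UNIV. AE x in (lborel :: (real^'n::finite) measure). x $ i \<noteq> 0"
    by (simp add: cart_eq_inner_axis)
  then show ?thesis by (subst (asm) AE_finite_all[symmetric]) auto
qed


lemma powr_as_prod:
  fixes x r :: real assumes "x > 0"
  shows "x powr r = (\<Prod>i\<in>(UNIV::'n::finite set). x powr (r / real CARD('n)))"
proof -
  have "(\<Prod>i\<in>(UNIV::'n::finite set). x powr (r / real CARD('n))) = (x powr (r / real CARD('n))) ^ CARD('n)"
    by simp
  also have "\<dots> = (x powr (r / real CARD('n))) powr (real CARD('n))"
    using assms by (simp add: powr_realpow)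
  also have "\<dots> = x powr r" by (simp add: powr_powr)
  finally show ?thesis by simp
qed

lemma int_vec_tail:
  fixes p :: real assumes p: "p > real CARD('n::finite)"
  shows "integrable lborel (\<lambda>h::real^'n. (1 + norm h) powr -p)"
proof -
  have d0: "real CARD('n) > 0" by simp
  have q: "p / real CARD('n) > 1" using p d0 by (simp add: field_simps)
  have i: "integrable lborel (\<lambda>h::real^'n. \<Prod>i\<in>UNIV. (1 + \<bar>h$i\<bar>) powr -(p / real CARD('n)))"
    by (rule prod_integrable_vec) (rule int_1d_tail[OF q])
  moreover have "(\<lambda>h::real^'n. (1 + norm h) powr -p) \<in> borel_measurable lborel" by measurable
  moreover have "AE h in lborel. norm ((1 + norm h) powr -p) \<le> norm (\<Prod>i\<in>UNIV. (1 + \<bar>(h::real^'n)$i\<bar>) powr -(p / real CARD('n)))"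
  proof (rule AE_I2)
    fix h :: "real^'n"
    have "(1 + norm h) powr -p = (\<Prod>i\<in>(UNIV::'n set). (1 + norm h) powr (-p / real CARD('n)))"
      by (rule powr_as_prod) (simp add: add_pos_nonneg)
    also have "\<dots> \<le> (\<Prod>i\<in>UNIV. (1 + \<bar>h$i\<bar>) powr -(p / real CARD('n)))"
    proof (rule prod_mono, safe)
      fix i
      show "0 \<le> (1 + norm h) powr (-p / real CARD('n))" by simp
      show "(1 + norm h) powr (-p / real CARD('n)) \<le> (1 + \<bar>h$i\<bar>) powr -(p / real CARD('n))"
        unfolding minus_divide_left using component_le_norm_cart[of h i] p d0
        by (intro powr_mono2') (auto simp: divide_nonneg_pos)
    qed
    finally show "norm ((1 + norm h) powr -p) \<le> norm (\<Prod>i\<in>UNIV. (1 + \<bar>h$i\<bar>) powr -(p / real CARD('n)))"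
      by (simp add: prod_nonneg abs_prod[symmetric])
  qed
  ultimately show ?thesis by (rule Bochner_Integration.integrable_bound)
qed

lemma int_vec_sing:
  fixes b :: real assumes b: "0 \<le> b" "b < real CARD('n::finite)"
  shows "integrable lborel (\<lambda>h::real^'n. indicator {h. norm h < 1} h * norm h powr -b)"
proof -
  have d0: "real CARD('n) > 0" by simp
  have c: "0 \<le> b / real CARD('n)" "b / real CARD('n) < 1" using b d0 by (auto simp: field_simps)
  have i: "integrable lborel (\<lambda>h::real^'n. \<Prod>i\<in>UNIV. indicator {-1..1} (h$i) * \<bar>h$i\<bar> powr -(b / real CARD('n)))"
    by (rule prod_integrable_vec) (rule int_1d_sing[OF c])
  moreover have "(\<lambda>h::real^'n. indicator {h. norm h < 1} h * norm h powr -b) \<in> borel_measurable lborel"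
    by measurable
  moreover have "AE h in lborel. norm (indicator {h. norm h < 1} h * norm h powr -b)
     \<le> norm (\<Prod>i\<in>UNIV. indicator {-1..1} ((h::real^'n)$i) * \<bar>h$i\<bar> powr -(b / real CARD('n)))"
    using AE_vec_nonzero
  proof (rule AE_mp, intro AE_I2 impI)
    fix h :: "real^'n" assume nz: "\<forall>i. h$i \<noteq> 0"
    show "norm (indicator {h. norm h < 1} h * norm h powr -b)
     \<le> norm (\<Prod>i\<in>UNIV. indicator {-1..1} (h$i) * \<bar>h$i\<bar> powr -(b / real CARD('n)))"
    proof (cases "norm h < 1")
      case False then show ?thesis by simp
    next
      case True
      have hpos: "norm h > 0" using nz by (metis norm_eq_zero vec_component zero_index less_linear norm_ge_zero order.not_eq_order_implies_strict)
      have "norm (indicator {h. norm h < 1} h * norm h powr -b) = norm h powr -b" using True by simp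
      also have "\<dots> = (\<Prod>i\<in>(UNIV::'n set). norm h powr (-b / real CARD('n)))"
        by (rule powr_as_prod) (rule hpos)
      also have "\<dots> \<le> (\<Prod>i\<in>UNIV. indicator {-1..1} (h$i) * \<bar>h$i\<bar> powr -(b / real CARD('n)))"
      proof (rule prod_mono, safe)
        fix i
        show "0 \<le> norm h powr (-b / real CARD('n))" by simp
        have "\<bar>h$i\<bar> \<le> norm h" by (rule component_le_norm_cart)
        then have "h$i \<in> {-1..1}" using True by auto
        moreover have "norm h powr (-b / real CARD('n)) \<le> \<bar>h$i\<bar> powr -(b / real CARD('n))"
          unfolding minus_divide_left using component_le_norm_cart[of h i] nz b d0
          by (intro powr_mono2') (auto simp: divide_nonneg_pos)
        ultimately show "norm h powr (-b / real CARD('n)) \<le> indicator {-1..1} (h$i) * \<bar>h$i\<bar> powr -(b / real CARD('n))"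
          by simp
      qed
      also have "\<dots> \<le> norm (\<Prod>i\<in>UNIV. indicator {-1..1} (h$i) * \<bar>h$i\<bar> powr -(b / real CARD('n)))"
        by simp
      finally show ?thesis .
    qed
  qed
  ultimately show ?thesis by (rule Bochner_Integration.integrable_bound)
qed


lemma deriv_axis:
  fixes f :: "real^'n::finite \<Rightarrow> real"
  assumes D: "\<And>y. (\<lambda>t. f (y + t *\<^sub>R axis i 1)) differentiable (at 0)"
  shows "((\<lambda>t. f (x + t *\<^sub>R axis i 1)) has_real_derivative pd i f (x + t0 *\<^sub>R axis i 1)) (at t0)"
proof -
  let ?y = "x + t0 *\<^sub>R axis i 1"
  have "((\<lambda>s. f (?y + s *\<^sub>R axis i 1)) has_real_derivative pd i f ?y) (at 0)"
    using D[of ?y] unfolding pd_def by (simp add: DERIV_deriv_iff_real_differentiable[symmetric])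
  moreover have "(\<lambda>s. f (?y + s *\<^sub>R axis i 1)) = (\<lambda>s. (\<lambda>t. f (x + t *\<^sub>R axis i 1)) (s + t0))"
    by (simp add: algebra_simps scaleR_add_left)
  ultimately have "((\<lambda>s. (\<lambda>t. f (x + t *\<^sub>R axis i 1)) (s + t0)) has_real_derivative pd i f ?y) (at 0)"
    by simp
  then show ?thesis using DERIV_shift[of "\<lambda>t. f (x + t *\<^sub>R axis i 1)" "pd i f ?y" 0 t0] by simp
qed

lemma mvt_axis:
  fixes f :: "real^'n::finite \<Rightarrow> real"
  assumes D: "\<And>y. (\<lambda>t. f (y + t *\<^sub>R axis i 1)) differentiable (at 0)"
  shows "\<exists>\<theta>. 0 \<le> \<theta> \<and> \<theta> \<le> 1 \<and> f (x + t *\<^sub>R axis i 1) - f x = t * pd i f (x + (\<theta> * t) *\<^sub>R axis i 1)"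
proof -
  let ?\<phi> = "\<lambda>t. f (x + t *\<^sub>R axis i 1)"
  have der: "\<And>z. DERIV ?\<phi> z :> pd i f (x + z *\<^sub>R axis i 1)" by (rule deriv_axis[OF D])
  consider "t = 0" | "t > 0" | "t < 0" by linarith
  then show ?thesis
  proof cases
    case 1 then show ?thesis by (intro exI[of _ 0]) simp
  next
    case 2
    obtain z where z: "0 < z" "z < t" "?\<phi> t - ?\<phi> 0 = (t - 0) * pd i f (x + z *\<^sub>R axis i 1)"
      using MVT2[OF 2 der] by blast
    show ?thesis using z 2 by (intro exI[of _ "z / t"]) auto
  next
    case 3
    obtain z where z: "t < z" "z < 0" "?\<phi> 0 - ?\<phi> t = (0 - t) * pd i f (x + z *\<^sub>R axis i 1)"
      using MVT2[OF 3 der] by blast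
    show ?thesis using z 3 by (intro exI[of _ "z / t"]) (auto simp: field_simps)
  qed
qed

definition trunc :: "real^'n::finite \<Rightarrow> 'n set \<Rightarrow> real^'n" where
  "trunc h S = (\<chi> i. if i \<in> S then h$i else 0)"

lemma trunc_insert: "j \<notin> S \<Longrightarrow> trunc h (insert j S) = trunc h S + (h$j) *\<^sub>R axis j 1"
  by (auto simp: trunc_def vec_eq_iff axis_def)

lemma trunc_UNIV: "trunc h UNIV = h" by (simp add: trunc_def vec_eq_iff)
lemma trunc_empty: "trunc h {} = 0" by (simp add: trunc_def vec_eq_iff)

lemma norm_trunc_step:
  fixes h :: "real^'n::finite"
  assumes "j \<notin> S" "0 \<le> \<theta>" "\<theta> \<le> 1"
  shows "norm (trunc h S + (\<theta> * h$j) *\<^sub>R axis j 1) \<le> norm h"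
    and "(\<Sum>i\<in>UNIV. \<bar>(trunc h S + (\<theta> * h$j) *\<^sub>R axis j 1)$i\<bar>) \<le> (\<Sum>i\<in>UNIV. \<bar>h$i\<bar>)"
proof -
  have c: "\<bar>(trunc h S + (\<theta> * h$j) *\<^sub>R axis j 1)$i\<bar> \<le> \<bar>h$i\<bar>" for i
  proof -
    have "\<bar>\<theta> * h$j\<bar> \<le> \<bar>h$j\<bar>" using assms by (simp add: abs_mult mult_left_le_one_le)
    then show ?thesis using assms(1) by (auto simp: trunc_def axis_def)
  qed
  show "norm (trunc h S + (\<theta> * h$j) *\<^sub>R axis j 1) \<le> norm h"
    by (rule norm_le_componentwise_cart) (use c in simp)
  show "(\<Sum>i\<in>UNIV. \<bar>(trunc h S + (\<theta> * h$j) *\<^sub>R axis j 1)$i\<bar>) \<le> (\<Sum>i\<in>UNIV. \<bar>h$i\<bar>)"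
    by (rule sum_mono) (rule c)
qed

lemma lip_axis:
  fixes f :: "real^'n::finite \<Rightarrow> real"
  assumes D: "\<And>i y. (\<lambda>t. f (y + t *\<^sub>R axis i 1)) differentiable (at 0)"
    and bnd: "\<And>i y. norm (y - u) \<le> r \<Longrightarrow> \<bar>pd i f y\<bar> \<le> M"
    and h: "norm h \<le> r"
  shows "\<bar>f (u + h) - f u\<bar> \<le> M * (\<Sum>i\<in>UNIV. \<bar>h$i\<bar>)"
proof -
  have "\<bar>f (u + trunc h S) - f u\<bar> \<le> M * (\<Sum>i\<in>S. \<bar>h$i\<bar>)" if "finite S" for S
    using that
  proof (induction S rule: finite_induct)
    case empty then show ?case by (simp add: trunc_empty)
  next
    case (insert j S)
    obtain \<theta> where th: "0 \<le> \<theta>" "\<theta> \<le> 1"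
      and eq: "f (u + trunc h S + (h$j) *\<^sub>R axis j 1) - f (u + trunc h S)
         = h$j * pd j f (u + trunc h S + (\<theta> * h$j) *\<^sub>R axis j 1)"
      using mvt_axis[where i=j and x="u + trunc h S" and t="h$j" and f=f, OF D] by blast
    have "norm ((u + trunc h S + (\<theta> * h$j) *\<^sub>R axis j 1) - u) \<le> r"
      using norm_trunc_step(1)[OF insert(2) th, of h] h by (simp add: algebra_simps)
    then have b: "\<bar>pd j f (u + trunc h S + (\<theta> * h$j) *\<^sub>R axis j 1)\<bar> \<le> M" by (rule bnd)
    have "\<bar>f (u + trunc h (insert j S)) - f u\<bar>
       \<le> \<bar>f (u + trunc h S + (h$j) *\<^sub>R axis j 1) - f (u + trunc h S)\<bar> + \<bar>f (u + trunc h S) - f u\<bar>"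
      by (simp add: trunc_insert[OF insert(2)] add.assoc)
    also have "\<dots> \<le> \<bar>h$j\<bar> * M + M * (\<Sum>i\<in>S. \<bar>h$i\<bar>)"
      using insert(3) b by (auto simp: eq abs_mult intro!: add_mono mult_left_mono)
    finally show ?case using insert by (simp add: algebra_simps)
  qed
  from this[of UNIV] show ?thesis by (simp add: trunc_UNIV)
qed

lemma taylor_axis:
  fixes f :: "real^'n::finite \<Rightarrow> real"
  assumes D: "\<And>i y. (\<lambda>t. f (y + t *\<^sub>R axis i 1)) differentiable (at 0)"
    and D2: "\<And>i j y. (\<lambda>t. pd j f (y + t *\<^sub>R axis i 1)) differentiable (at 0)"
    and bnd: "\<And>i j y. norm (y - u) \<le> r \<Longrightarrow> \<bar>pd i (pd j f) y\<bar> \<le> M"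
    and h: "norm h \<le> r"
  shows "\<bar>f (u + h) - f u - (\<Sum>j\<in>UNIV. pd j f u * h$j)\<bar> \<le> M * (\<Sum>i\<in>UNIV. \<bar>h$i\<bar>)^2"
proof -
  let ?A = "\<Sum>i\<in>UNIV. \<bar>h$i\<bar>"
  have "\<bar>f (u + trunc h S) - f u - (\<Sum>j\<in>S. pd j f u * h$j)\<bar> \<le> M * (\<Sum>i\<in>S. \<bar>h$i\<bar>) * ?A" if "finite S" for S
    using that
  proof (induction S rule: finite_induct)
    case empty then show ?case by (simp add: trunc_empty)
  next
    case (insert j S)
    obtain \<theta> where th: "0 \<le> \<theta>" "\<theta> \<le> 1"
      and eq: "f (u + trunc h S + (h$j) *\<^sub>R axis j 1) - f (u + trunc h S)
         = h$j * pd j f (u + trunc h S + (\<theta> * h$j) *\<^sub>R axis j 1)"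
      using mvt_axis[where i=j and x="u + trunc h S" and t="h$j" and f=f, OF D] by blast
    define p where "p = trunc h S + (\<theta> * h$j) *\<^sub>R axis j 1"
    have pn: "norm p \<le> r" using norm_trunc_step(1)[OF insert(2) th, of h] h by (simp add: p_def)
    have ps: "(\<Sum>i\<in>UNIV. \<bar>p$i\<bar>) \<le> ?A" using norm_trunc_step(2)[OF insert(2) th, of h] by (simp add: p_def)
    have "\<bar>pd j f (u + p) - pd j f u\<bar> \<le> M * (\<Sum>i\<in>UNIV. \<bar>p$i\<bar>)"
      using lip_axis[where f="pd j f" and u=u and r=r and M=M and h=p] D2 bnd pn by blast
    also have "\<dots> \<le> M * ?A"
    proof -
      have "\<bar>pd j (pd j f) u\<bar> \<le> M" by (rule bnd) (use h norm_ge_zero[of h] in \<open>simp, linarith\<close>)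
      then have "0 \<le> M" by linarith
      then show ?thesis using ps by (simp add: mult_left_mono)
    qed
    finally have b: "\<bar>pd j f (u + p) - pd j f u\<bar> \<le> M * ?A" .
    have "f (u + trunc h (insert j S)) - f u - (\<Sum>j\<in>insert j S. pd j f u * h$j)
       = h$j * (pd j f (u + p) - pd j f u) + (f (u + trunc h S) - f u - (\<Sum>j\<in>S. pd j f u * h$j))"
      using insert(1,2) eq by (simp add: trunc_insert add.assoc p_def algebra_simps)
    then have "\<bar>f (u + trunc h (insert j S)) - f u - (\<Sum>j\<in>insert j S. pd j f u * h$j)\<bar>
       \<le> \<bar>h$j\<bar> * \<bar>pd j f (u + p) - pd j f u\<bar> + \<bar>f (u + trunc h S) - f u - (\<Sum>j\<in>S. pd j f u * h$j)\<bar>"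
      by (simp add: abs_mult[symmetric] abs_triangle_ineq)
    also have "\<dots> \<le> \<bar>h$j\<bar> * (M * ?A) + M * (\<Sum>i\<in>S. \<bar>h$i\<bar>) * ?A"
      using insert(3) b by (intro add_mono mult_left_mono) auto
    finally show ?case using insert by (simp add: algebra_simps)
  qed
  from this[of UNIV] show ?thesis by (simp add: trunc_UNIV power2_eq_square mult.assoc)
qed


lemma one_plus_norm_pos [simp]:
  fixes x :: "'a::real_normed_vector"
  shows "0 < 1 + norm x" "1 + norm x \<noteq> 0" "\<not> 1 + norm x < 0" "\<not> 1 + norm x \<le> 0"
  using norm_ge_zero[of x] by linarith+

lemma integrable_shift_lborel:
  fixes f :: "'a::euclidean_space \<Rightarrow> real"
  assumes "integrable lborel f"
  shows "integrable lborel (\<lambda>h. f (c + h))"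
proof -
  have [measurable]: "f \<in> borel_measurable borel" using borel_measurable_integrable[OF assms] by simp
  have "integrable (distr lborel borel ((+) c)) f" by (simp add: lborel_distr_plus assms)
  then show ?thesis by (subst (asm) integrable_distr_eq) auto
qed

lemma integral_shift_lborel:
  fixes f :: "'a::euclidean_space \<Rightarrow> real"
  assumes [measurable]: "f \<in> borel_measurable borel"
  shows "integral\<^sup>L lborel f = integral\<^sup>L lborel (\<lambda>h. f (c + h))"
proof -
  have "integral\<^sup>L lborel f = integral\<^sup>L (distr lborel borel ((+) c)) f" by (simp add: lborel_distr_plus)
  also have "\<dots> = integral\<^sup>L lborel (\<lambda>h. f (c + h))" by (rule integral_distr) auto
  finally show ?thesis .
qed

lemma lborel_distr_uminus_eucl: "distr lborel borel uminus = (lborel :: 'a::euclidean_space measure)"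
proof -
  have "(lborel :: 'a measure) = distr lborel borel (\<lambda>x. - x)"
    using lborel_affine[of "-1::real" "0::'a"] by (simp add: density_1)
  then show ?thesis by (simp add: fun_eq_iff)
qed

lemma integrable_reflect_lborel:
  fixes f :: "'a::euclidean_space \<Rightarrow> real"
  assumes "integrable lborel f"
  shows "integrable lborel (\<lambda>h. f (- h))"
proof -
  have [measurable]: "f \<in> borel_measurable borel" using borel_measurable_integrable[OF assms] by simp
  have "integrable (distr lborel borel uminus) f" by (simp add: lborel_distr_uminus_eucl assms)
  then show ?thesis by (subst (asm) integrable_distr_eq) auto
qed

lemma integral_reflect_lborel:
  fixes f :: "'a::euclidean_space \<Rightarrow> real"
  assumes [measurable]: "f \<in> borel_measurable borel"
  shows "integral\<^sup>L lborel f = integral\<^sup>L lborel (\<lambda>h. f (- h))"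
proof -
  have "integral\<^sup>L lborel f = integral\<^sup>L (distr lborel borel uminus) f" by (simp add: lborel_distr_uminus_eucl)
  also have "\<dots> = integral\<^sup>L lborel (\<lambda>h. f (- h))" by (rule integral_distr) auto
  finally show ?thesis .
qed

lemma peetre:
  fixes u h :: "'a::real_normed_vector" and a :: real
  assumes "1 \<le> norm h" "0 \<le> a"
  shows "norm h powr -a \<le> 2 powr a * (1 + norm (u + h)) powr a * (1 + norm u) powr -a"
proof -
  have "1 + norm u \<le> (1 + norm (u + h)) * (1 + norm h)"
  proof -
    have "norm u \<le> norm (u + h) + norm h" using norm_triangle_ineq4[of "u+h" h] by simp
    then show ?thesis by (simp add: algebra_simps) (smt (verit) mult_nonneg_nonneg norm_ge_zero)
  qed
  also have "\<dots> \<le> (1 + norm (u + h)) * (2 * norm h)"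
    using assms by (intro mult_left_mono) auto
  finally have le: "1 + norm u \<le> 2 * (1 + norm (u + h)) * norm h" by (simp add: algebra_simps)
  have hp: "norm h > 0" using assms by linarith
  have "(1 + norm u) powr a \<le> (2 * (1 + norm (u + h)) * norm h) powr a"
    using le assms by (intro powr_mono2) auto
  also have "\<dots> = (2 * (1 + norm (u + h))) powr a * norm h powr a"
    by (rule powr_mult)
  also have "(2 * (1 + norm (u + h))) powr a = 2 powr a * (1 + norm (u + h)) powr a"
    by (rule powr_mult)
  finally have "(1 + norm u) powr a \<le> 2 powr a * (1 + norm (u + h)) powr a * norm h powr a" .
  then have "(1 + norm u) powr a * norm h powr -a \<le> 2 powr a * (1 + norm (u + h)) powr a"
    using hp by (simp add: powr_minus field_simps)
  then have "norm h powr -a * (1 + norm u) powr a * (1 + norm u) powr -a \<le> 2 powr a * (1 + norm (u + h)) powr a * (1 + norm u) powr -a"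
    by (intro mult_right_mono) (auto simp: mult.commute)
  moreover have "(1 + norm u) powr a * (1 + norm u) powr -a = 1"
  proof -
    have "(1 + norm u) powr a > 0" using norm_ge_zero[of u] by (simp add: add_pos_nonneg)
    then show ?thesis by (simp add: powr_minus)
  qed
  ultimately show ?thesis by (simp add: mult.assoc)
qed

lemma near_decay:
  fixes u y :: "'a::real_normed_vector" and N :: real
  assumes "norm (y - u) \<le> 1" "0 \<le> N"
  shows "(1 + norm y) powr -N \<le> 2 powr N * (1 + norm u) powr -N"
proof -
  have "norm u \<le> norm y + 1" using norm_triangle_ineq4[of y "y - u"] assms by (simp add: norm_minus_commute)
  then have le0: "1 + norm u \<le> 2 + 2 * norm y" using norm_ge_zero[of y] by linarith
  have le: "1 + norm u \<le> 2 * (1 + norm y)" using le0 by (simp add: algebra_simps)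
  have "(1 + norm u) powr N \<le> (2 * (1 + norm y)) powr N"
    using le assms by (intro powr_mono2) auto
  also have "(2 * (1 + norm y)) powr N = 2 powr N * (1 + norm y) powr N"
    by (rule powr_mult)
  finally have "(1 + norm u) powr N \<le> 2 powr N * (1 + norm y) powr N" .
  moreover have "(1 + norm y) powr N > 0" "(1 + norm u) powr N > 0"
    using norm_ge_zero[of y] norm_ge_zero[of u] by (simp_all add: add_pos_nonneg)
  ultimately show ?thesis
    by (simp add: powr_minus divide_simps mult.commute)
qed


locale fl_setting =
  fixes g :: "real^'n::finite \<Rightarrow> real" and B N \<gamma> \<sigma> :: real and k :: 'n and u :: "real^'n"
  assumes cont: "continuous_on UNIV g"
    and D1: "\<And>i y. (\<lambda>t. g (y + t *\<^sub>R axis i 1)) differentiable (at 0)"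
    and D2: "\<And>i j y. (\<lambda>t. pd j g (y + t *\<^sub>R axis i 1)) differentiable (at 0)"
    and b0: "\<And>y. \<bar>g y\<bar> \<le> B * (1 + norm y) powr -N"
    and b1: "\<And>i y. \<bar>pd i g y\<bar> \<le> B * (1 + norm y) powr -N"
    and b2: "\<And>i j y. \<bar>pd i (pd j g) y\<bar> \<le> B * (1 + norm y) powr -N"
    and Nge: "N \<ge> 2 * real CARD('n) + 3"
    and gam: "0 < \<gamma>" "\<gamma> < 2"
    and sig: "\<sigma> = 1 \<or> \<sigma> = -1"
    and uD: "0 < \<sigma> * u$k"
begin

definition "a = real CARD('n) + \<gamma>"
definition "DD = {v::real^'n. 0 < \<sigma> * v$k}"
definition "\<rho> = min 1 \<bar>u$k\<bar>"
definition "Mu = B * 2 powr N * (1 + norm u) powr -N"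
definition "b1e = real CARD('n) - 1 + \<gamma>/2"
definition "b2e = max 0 (real CARD('n) + \<gamma> - 2)"

lemma gm[measurable]: "g \<in> borel_measurable borel"
  by (rule borel_measurable_continuous_onI[OF cont])

lemma d_ge1: "real CARD('n) \<ge> 1" by simp
lemma a_pos: "a > 0" using gam by (simp add: a_def)
lemma N_pos: "N \<ge> 0" using Nge by simp
lemma B_nonneg: "B \<ge> 0"
proof -
  have "0 \<le> \<bar>g 0\<bar>" by simp
  also have "\<dots> \<le> B * (1 + norm (0::real^'n)) powr -N" by (rule b0)
  finally show ?thesis by simp
qed
lemma Mu_nonneg: "Mu \<ge> 0" using B_nonneg by (simp add: Mu_def)
lemma rho_pos: "\<rho> > 0" using uD by (auto simp: \<rho>_def)
lemma rho_le1: "\<rho> \<le> 1" by (simp add: \<rho>_def)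
lemma b1e_range: "0 \<le> b1e" "b1e < real CARD('n)" using gam d_ge1 by (auto simp: b1e_def)
lemma b2e_range: "0 \<le> b2e" "b2e < real CARD('n)" using gam d_ge1 by (auto simp: b2e_def)

lemma DD_open: "DD \<in> sets borel"
  unfolding DD_def by measurable

lemma ball_in_DD: "norm h < \<rho> \<Longrightarrow> u + h \<in> DD"
proof -
  assume h: "norm h < \<rho>"
  have "\<bar>h$k\<bar> \<le> norm h" by (rule component_le_norm_cart)
  then have "\<bar>h$k\<bar> < \<bar>u$k\<bar>" using h by (simp add: \<rho>_def)
  then show "u + h \<in> DD" using uD sig by (auto simp: DD_def)
qed

lemma near_bounds:
  assumes "norm (y - u) \<le> 1"
  shows "\<bar>pd i g y\<bar> \<le> Mu" "\<bar>pd i (pd j g) y\<bar> \<le> Mu" "\<bar>g y\<bar> \<le> Mu"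
proof -
  have "B * (1 + norm y) powr -N \<le> Mu"
    unfolding Mu_def using near_decay[OF assms N_pos] B_nonneg
    by (simp add: mult.assoc mult_left_mono)
  then show "\<bar>pd i g y\<bar> \<le> Mu" "\<bar>pd i (pd j g) y\<bar> \<le> Mu" "\<bar>g y\<bar> \<le> Mu"
    using b0[of y] b1[of i y] b2[of i j y] by linarith+
qed

lemma sum_abs_le: "(\<Sum>i\<in>UNIV. \<bar>(h::real^'n)$i\<bar>) \<le> real CARD('n) * norm h"
proof -
  have "(\<Sum>i\<in>UNIV. \<bar>h$i\<bar>) \<le> (\<Sum>i\<in>(UNIV::'n set). norm h)"
    by (rule sum_mono) (rule component_le_norm_cart)
  then show ?thesis by simp
qed

lemma lip_u:
  assumes "norm h \<le> 1"
  shows "\<bar>g (u + h) - g u\<bar> \<le> Mu * real CARD('n) * norm h"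
proof -
  have "\<bar>g (u + h) - g u\<bar> \<le> Mu * (\<Sum>i\<in>UNIV. \<bar>h$i\<bar>)"
    by (rule lip_axis[OF D1 _ assms]) (rule near_bounds)
  also have "\<dots> \<le> Mu * (real CARD('n) * norm h)" by (intro mult_left_mono sum_abs_le Mu_nonneg)
  finally show ?thesis by (simp add: mult.assoc)
qed

lemma second_diff:
  assumes "norm h \<le> 1"
  shows "\<bar>2 * g u - g (u + h) - g (u - h)\<bar> \<le> 2 * Mu * real CARD('n)^2 * norm h ^ 2"
proof -
  have t1: "\<bar>g (u + h) - g u - (\<Sum>j\<in>UNIV. pd j g u * h$j)\<bar> \<le> Mu * (\<Sum>i\<in>UNIV. \<bar>h$i\<bar>)^2"
    by (rule taylor_axis[OF D1 D2 _ assms]) (rule near_bounds)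
  have t2: "\<bar>g (u + (-h)) - g u - (\<Sum>j\<in>UNIV. pd j g u * (-h)$j)\<bar> \<le> Mu * (\<Sum>i\<in>UNIV. \<bar>(-h)$i\<bar>)^2"
    by (rule taylor_axis[OF D1 D2 _]) (auto intro: near_bounds simp: assms)
  have s: "(\<Sum>i\<in>UNIV. \<bar>h$i\<bar>)^2 \<le> (real CARD('n) * norm h)^2"
    by (rule power_mono[OF sum_abs_le]) (simp add: sum_nonneg)
  have "\<bar>2 * g u - g (u + h) - g (u - h)\<bar> \<le> 2 * (Mu * (\<Sum>i\<in>UNIV. \<bar>h$i\<bar>)^2)"
    using t1 t2 by (simp add: sum_negf)
  also have "\<dots> \<le> 2 * (Mu * (real CARD('n) * norm h)^2)"
    using s Mu_nonneg by (intro mult_left_mono) auto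
  finally show ?thesis by (simp add: power_mult_distrib algebra_simps)
qed

end

context fl_setting begin

definition "V1 h = indicator {h::real^'n. norm h < 1} h * norm h powr -b1e"
definition "V2 h = indicator {h::real^'n. norm h < 1} h * norm h powr -b2e"
definition "T1 h = (1 + norm (h::real^'n)) powr -a"
definition "T2 h = (1 + norm (h::real^'n)) powr -(real CARD('n) + 1)"

lemma V1_int: "integrable lborel V1"
  unfolding V1_def[abs_def] by (rule int_vec_sing[OF b1e_range])
lemma V2_int: "integrable lborel V2"
  unfolding V2_def[abs_def] by (rule int_vec_sing[OF b2e_range])
lemma T1_int: "integrable lborel T1"
  unfolding T1_def[abs_def] by (rule int_vec_tail) (use gam in \<open>simp add: a_def\<close>)
lemma T2_int: "integrable lborel T2"
  unfolding T2_def[abs_def] by (rule int_vec_tail) simp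
lemma T2s_int: "integrable lborel (\<lambda>h. T2 (u + h))"
  by (rule integrable_shift_lborel[OF T2_int])

lemma V1_nonneg: "V1 h \<ge> 0" by (simp add: V1_def)
lemma V2_nonneg: "V2 h \<ge> 0" by (simp add: V2_def)
lemma T1_nonneg: "T1 h \<ge> 0" by (simp add: T1_def)
lemma T2_nonneg: "T2 h \<ge> 0" by (simp add: T2_def)

lemma div_powr: "x / norm h powr a = x * norm h powr -a"
  by (simp add: powr_minus divide_inverse)

lemma pw_lip:
  assumes r: "0 < r" "r \<le> norm h" and h1: "norm h < 1"
  shows "\<bar>(g u - g (u + h)) / norm h powr a\<bar> \<le> Mu * real CARD('n) * r powr (-\<gamma>/2) * V1 h"
proof -
  have hp: "norm h > 0" using r by linarith
  have "\<bar>(g u - g (u + h)) / norm h powr a\<bar> = \<bar>g (u + h) - g u\<bar> * norm h powr -a"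
    by (simp add: div_powr abs_mult abs_minus_commute)
  also have "\<dots> \<le> (Mu * real CARD('n) * norm h) * norm h powr -a"
    using lip_u[of h] h1 by (intro mult_right_mono) auto
  also have "norm h * norm h powr -a = norm h powr -b1e * norm h powr (-\<gamma>/2)"
  proof -
    have "norm h * norm h powr -a = norm h powr 1 * norm h powr -a" using hp by simp
    also have "\<dots> = norm h powr (1 + -a)" by (rule powr_add[symmetric])
    also have "1 + -a = -b1e + (-\<gamma>/2)" by (simp add: a_def b1e_def)
    also have "norm h powr (-b1e + (-\<gamma>/2)) = norm h powr -b1e * norm h powr (-\<gamma>/2)" by (rule powr_add)
    finally show ?thesis .
  qed
  then have "(Mu * real CARD('n) * norm h) * norm h powr -a = Mu * real CARD('n) * norm h powr (-\<gamma>/2) * norm h powr -b1e"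
    by (simp add: algebra_simps)
  also have "\<dots> \<le> Mu * real CARD('n) * r powr (-\<gamma>/2) * norm h powr -b1e"
  proof -
    have "norm h powr (-\<gamma>/2) \<le> r powr (-\<gamma>/2)" using r gam by (intro powr_mono2') auto
    then show ?thesis using Mu_nonneg by (intro mult_right_mono mult_left_mono) auto
  qed
  also have "norm h powr -b1e = V1 h" using h1 by (simp add: V1_def)
  finally show ?thesis .
qed

lemma pw_tail:
  assumes h1: "1 \<le> norm h"
  shows "\<bar>(g u - g (u + h)) / norm h powr a\<bar> \<le> Mu * 2 powr a * T1 h + B * 2 powr a * (1 + norm u) powr -a * T2 (u + h)"
proof -
  have hp: "norm h > 0" using h1 by linarith
  have "\<bar>(g u - g (u + h)) / norm h powr a\<bar> \<le> (\<bar>g u\<bar> + \<bar>g (u + h)\<bar>) * norm h powr -a"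
    by (simp add: div_powr abs_mult) (intro mult_right_mono; simp)
  also have "\<dots> = \<bar>g u\<bar> * norm h powr -a + \<bar>g (u + h)\<bar> * norm h powr -a" by (simp add: algebra_simps)
  also have "\<bar>g u\<bar> * norm h powr -a \<le> Mu * (2 powr a * T1 h)"
  proof (rule mult_mono)
    show "\<bar>g u\<bar> \<le> Mu" by (rule near_bounds) simp
    have "1 + norm h \<le> 2 * norm h" using h1 by simp
    then have "(1 + norm h) powr a \<le> (2 * norm h) powr a" using a_pos by (intro powr_mono2) auto
    also have "\<dots> = 2 powr a * norm h powr a" by (rule powr_mult)
    finally have "(1 + norm h) powr a \<le> 2 powr a * norm h powr a" .
    then show "norm h powr -a \<le> 2 powr a * T1 h"
      using hp by (simp add: T1_def powr_minus divide_simps mult.commute)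
  qed (use Mu_nonneg in auto)
  also have "\<bar>g (u + h)\<bar> * norm h powr -a \<le> (B * (1 + norm (u + h)) powr -N) * (2 powr a * (1 + norm (u + h)) powr a * (1 + norm u) powr -a)"
    by (intro mult_mono b0 peetre h1) (use a_pos B_nonneg in auto)
  also have "(B * (1 + norm (u + h)) powr -N) * (2 powr a * (1 + norm (u + h)) powr a * (1 + norm u) powr -a)
     = B * 2 powr a * (1 + norm u) powr -a * (1 + norm (u + h)) powr (a - N)"
  proof -
    have "(1 + norm (u + h)) powr (a + -N) = (1 + norm (u + h)) powr a * (1 + norm (u + h)) powr -N"
      by (rule powr_add)
    then show ?thesis by (simp add: ac_simps)
  qed
  also have "\<dots> \<le> B * 2 powr a * (1 + norm u) powr -a * T2 (u + h)"
  proof -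
    have "(1 + norm (u + h)) powr (a - N) \<le> (1 + norm (u + h)) powr -(real CARD('n) + 1)"
      using Nge gam by (intro powr_mono) (auto simp: a_def)
    then show ?thesis using B_nonneg by (simp add: T2_def mult_left_mono)
  qed
  finally show ?thesis by (simp add: mult.assoc)
qed

lemma pw_second:
  assumes h1: "norm h < \<rho>"
  shows "\<bar>(2 * g u - g (u + h) - g (u - h)) / norm h powr a\<bar> \<le> 2 * Mu * real CARD('n)^2 * V2 h"
proof (cases "h = 0")
  case True then show ?thesis using Mu_nonneg V2_nonneg by simp
next
  case False
  then have hp: "norm h > 0" by simp
  have hl: "norm h < 1" using h1 rho_le1 by linarith
  have "\<bar>(2 * g u - g (u + h) - g (u - h)) / norm h powr a\<bar> = \<bar>2 * g u - g (u + h) - g (u - h)\<bar> * norm h powr -a"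
    by (simp add: div_powr abs_mult)
  also have "\<dots> \<le> (2 * Mu * real CARD('n)^2 * norm h ^ 2) * norm h powr -a"
    using second_diff[of h] hl by (intro mult_right_mono) auto
  also have "norm h ^ 2 * norm h powr -a = norm h powr (2 - a)"
  proof -
    have "norm h ^ 2 = norm h powr 2" using powr_realpow[OF hp, of 2] by simp
    moreover have "norm h powr 2 * norm h powr -a = norm h powr (2 + -a)" by (rule powr_add[symmetric])
    ultimately show ?thesis by simp
  qed
  then have "(2 * Mu * real CARD('n)^2 * norm h ^ 2) * norm h powr -a = 2 * Mu * real CARD('n)^2 * norm h powr (2 - a)"
    by (simp add: algebra_simps)
  also have "\<dots> \<le> 2 * Mu * real CARD('n)^2 * V2 h"
  proof -
    have "norm h powr (2 - a) \<le> norm h powr -b2e"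
      using hl by (intro powr_mono') (auto simp: a_def b2e_def)
    then show ?thesis using hl Mu_nonneg by (simp add: V2_def mult_left_mono)
  qed
  finally show ?thesis .
qed

end

lemma int_dom:
  fixes f w :: "'a \<Rightarrow> real"
  assumes "integrable M w" "f \<in> borel_measurable M" "\<And>x. \<bar>f x\<bar> \<le> w x"
  shows "integrable M f"
proof (rule Bochner_Integration.integrable_bound[OF assms(1,2)])
  show "AE x in M. norm (f x) \<le> norm (w x)"
    by (rule AE_I2) (use assms(3) in \<open>force intro: order.trans[OF _ abs_ge_self]\<close>)
qed

context fl_setting begin

definition "F \<epsilon> h = indicator DD (u+h) * indicator {h. \<epsilon> \<le> norm h} h * ((g u - g (u+h)) / norm h powr a)"
definition "psi \<epsilon> h = indicator {h. \<epsilon> \<le> norm h \<and> norm h < \<rho>} h * ((g u - g (u+h)) / norm h powr a)"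
definition "S0 h = indicator {h. norm h < \<rho>} h * ((2 * g u - g (u+h) - g (u-h)) / norm h powr a)"
definition "W h = Mu * real CARD('n) * \<rho> powr (-\<gamma>/2) * V1 h + Mu * 2 powr a * T1 h
   + B * 2 powr a * (1 + norm u) powr -a * T2 (u+h)"
definition "Iq \<epsilon> = set_lebesgue_integral lborel (DD \<inter> {v. \<epsilon> \<le> norm (v - u)})
   (\<lambda>v. (g u - g v) / norm (v - u) powr a)"

lemma DD_pred[measurable]: "Measurable.pred borel (\<lambda>v::real^'n. v \<in> DD)"
  using DD_open by (simp add: pred_def)

lemma F_meas[measurable]: "F \<epsilon> \<in> borel_measurable borel"
  unfolding F_def[abs_def] by measurable
lemma psi_meas[measurable]: "psi \<epsilon> \<in> borel_measurable borel"
  unfolding psi_def[abs_def] by measurable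
lemma S0_meas[measurable]: "S0 \<in> borel_measurable borel"
  unfolding S0_def[abs_def] by measurable

lemma W_int: "integrable lborel W"
  unfolding W_def[abs_def] using V1_int T1_int T2s_int by simp

lemma W_bound: "\<bar>F \<rho> h\<bar> \<le> W h"
proof -
  have w0: "0 \<le> Mu * real CARD('n) * \<rho> powr (-\<gamma>/2) * V1 h" "0 \<le> Mu * 2 powr a * T1 h"
    "0 \<le> B * 2 powr a * (1 + norm u) powr -a * T2 (u+h)"
    using Mu_nonneg B_nonneg V1_nonneg[of h] T1_nonneg[of h] T2_nonneg[of "u+h"] by auto
  consider "norm h < \<rho>" | "\<rho> \<le> norm h" "norm h < 1" | "1 \<le> norm h" by linarith
  then show ?thesis
  proof cases
    case 1 then show ?thesis using w0 by (simp add: F_def W_def)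
  next
    case 2
    have "\<bar>F \<rho> h\<bar> \<le> \<bar>(g u - g (u + h)) / norm h powr a\<bar>"
      by (simp add: F_def abs_mult indicator_def)
    also have "\<dots> \<le> Mu * real CARD('n) * \<rho> powr (-\<gamma>/2) * V1 h"
      by (rule pw_lip[OF rho_pos 2])
    finally show ?thesis using w0 by (simp add: W_def)
  next
    case 3
    have "\<bar>F \<rho> h\<bar> \<le> \<bar>(g u - g (u + h)) / norm h powr a\<bar>"
      by (simp add: F_def abs_mult indicator_def)
    also have "\<dots> \<le> Mu * 2 powr a * T1 h + B * 2 powr a * (1 + norm u) powr -a * T2 (u + h)"
      by (rule pw_tail[OF 3])
    finally show ?thesis using w0 by (simp add: W_def)
  qed
qed

lemma F_int: "integrable lborel (F \<rho>)"
  by (rule int_dom[OF W_int]) (auto intro: W_bound)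

lemma psi_bound:
  assumes "0 < \<epsilon>"
  shows "\<bar>psi \<epsilon> h\<bar> \<le> Mu * real CARD('n) * \<epsilon> powr (-\<gamma>/2) * V1 h"
proof (cases "\<epsilon> \<le> norm h \<and> norm h < \<rho>")
  case True
  then have "norm h < 1" using rho_le1 by linarith
  then have "\<bar>(g u - g (u + h)) / norm h powr a\<bar> \<le> Mu * real CARD('n) * \<epsilon> powr (-\<gamma>/2) * V1 h"
    using True assms by (intro pw_lip) auto
  then show ?thesis using True by (simp add: psi_def)
next
  case False then show ?thesis using Mu_nonneg V1_nonneg[of h] by (simp add: psi_def)
qed

lemma psi_int: "0 < \<epsilon> \<Longrightarrow> integrable lborel (psi \<epsilon>)"
  by (rule Bochner_Integration.integrable_bound[where f="\<lambda>h. Mu * real CARD('n) * \<epsilon> powr (-\<gamma>/2) * V1 h"])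
     (use V1_int psi_bound Mu_nonneg V1_nonneg in \<open>auto intro: order.trans[OF psi_bound]\<close>)

lemma S0_bound: "\<bar>S0 h\<bar> \<le> 2 * Mu * real CARD('n)^2 * V2 h"
proof (cases "norm h < \<rho>")
  case True then show ?thesis using pw_second[of h] by (simp add: S0_def)
next
  case False then show ?thesis using Mu_nonneg V2_nonneg[of h] by (simp add: S0_def)
qed

lemma S0_int: "integrable lborel S0"
  by (rule int_dom[where w="\<lambda>h. 2 * Mu * real CARD('n)^2 * V2 h"]) (use V2_int S0_bound in auto)

end

context fl_setting begin

lemma Iq_eq: "Iq \<epsilon> = integral\<^sup>L lborel (F \<epsilon>)"
proof -
  let ?f = "\<lambda>v. indicator (DD \<inter> {v. \<epsilon> \<le> norm (v - u)}) v *\<^sub>R ((g u - g v) / norm (v - u) powr a)"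
  have [measurable]: "?f \<in> borel_measurable borel" by measurable
  have "Iq \<epsilon> = integral\<^sup>L lborel ?f" by (simp add: Iq_def set_lebesgue_integral_def)
  also have "\<dots> = integral\<^sup>L lborel (\<lambda>h. ?f (u + h))" by (rule integral_shift_lborel) measurable
  also have "(\<lambda>h. ?f (u + h)) = F \<epsilon>"
    by (auto simp: F_def fun_eq_iff indicator_def)
  finally show ?thesis .
qed

lemma F_split: "\<epsilon> \<le> \<rho> \<Longrightarrow> F \<epsilon> h = F \<rho> h + psi \<epsilon> h"
  using ball_in_DD[of h] by (auto simp: F_def psi_def indicator_def)

lemma psi_sym:
  assumes "0 < \<epsilon>"
  shows "integral\<^sup>L lborel (psi \<epsilon>) = integral\<^sup>L lborel (\<lambda>h. indicator {h. \<epsilon> \<le> norm h} h * S0 h) / 2"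
proof -
  have i1: "integrable lborel (psi \<epsilon>)" by (rule psi_int[OF assms])
  have i2: "integrable lborel (\<lambda>h. psi \<epsilon> (- h))" by (rule integrable_reflect_lborel[OF i1])
  have r: "integral\<^sup>L lborel (psi \<epsilon>) = integral\<^sup>L lborel (\<lambda>h. psi \<epsilon> (- h))"
    by (rule integral_reflect_lborel) measurable
  have s: "psi \<epsilon> h + psi \<epsilon> (- h) = indicator {h. \<epsilon> \<le> norm h} h * S0 h" for h
    by (auto simp: psi_def S0_def indicator_def add_divide_distrib[symmetric])
  have "2 * integral\<^sup>L lborel (psi \<epsilon>) = integral\<^sup>L lborel (psi \<epsilon>) + integral\<^sup>L lborel (\<lambda>h. psi \<epsilon> (- h))"
    using r by simp
  also have "\<dots> = integral\<^sup>L lborel (\<lambda>h. psi \<epsilon> h + psi \<epsilon> (- h))"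
    by (rule Bochner_Integration.integral_add[OF i1 i2, symmetric])
  also have "\<dots> = integral\<^sup>L lborel (\<lambda>h. indicator {h. \<epsilon> \<le> norm h} h * S0 h)"
    by (simp add: s)
  finally show ?thesis by simp
qed

lemma lim_S0: "((\<lambda>\<epsilon>. integral\<^sup>L lborel (\<lambda>h. indicator {h. \<epsilon> \<le> norm h} h * S0 h)) \<longlongrightarrow> integral\<^sup>L lborel S0) (at_right 0)"
proof (rule tendsto_at_right_sequentially[where b=1])
  show "(0::real) < 1" by simp
  fix S :: "nat \<Rightarrow> real" assume Sp: "\<And>n. 0 < S n" and S0': "S \<longlonglongrightarrow> 0"
  show "(\<lambda>n. integral\<^sup>L lborel (\<lambda>h. indicator {h. S n \<le> norm h} h * S0 h)) \<longlonglongrightarrow> integral\<^sup>L lborel S0"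
  proof (rule integral_dominated_convergence[where w="\<lambda>h. 2 * Mu * real CARD('n)^2 * V2 h"])
    show "S0 \<in> borel_measurable lborel" by measurable
    show "(\<lambda>h. indicator {h. S n \<le> norm h} h * S0 h) \<in> borel_measurable lborel" for n by measurable
    show "integrable lborel (\<lambda>h. 2 * Mu * real CARD('n)^2 * V2 h)" using V2_int by simp
    show "AE h in lborel. norm (indicator {h. S n \<le> norm h} h * S0 h) \<le> 2 * Mu * real CARD('n)^2 * V2 h" for n
    proof (intro AE_I2)
      fix h :: "real^'n"
      have nn: "0 \<le> 2 * Mu * real CARD('n)^2 * V2 h" using Mu_nonneg V2_nonneg[of h] by simp
      show "norm (indicator {h. S n \<le> norm h} h * S0 h) \<le> 2 * Mu * real CARD('n)^2 * V2 h"
        using S0_bound[of h] nn by (simp add: indicator_def)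
    qed
    show "AE h in lborel. (\<lambda>n. indicator {h. S n \<le> norm h} h * S0 h) \<longlonglongrightarrow> S0 h"
    proof (rule AE_I2, rule tendsto_eventually)
      fix h :: "real^'n"
      show "\<forall>\<^sub>F n in sequentially. indicator {h. S n \<le> norm h} h * S0 h = S0 h"
      proof (cases "h = 0")
        case True
        then show ?thesis using Sp by (simp add: S0_def indicator_def not_le)
      next
        case False
        then have "norm h > 0" by simp
        from order_tendstoD(2)[OF S0' this] show ?thesis
          by eventually_elim (simp add: indicator_def)
      qed
    qed
  qed
qed

definition "Lval = integral\<^sup>L lborel (F \<rho>) + integral\<^sup>L lborel S0 / 2"

lemma main_lim: "(Iq \<longlongrightarrow> Lval) (at_right 0)"
proof -
  have "((\<lambda>\<epsilon>. integral\<^sup>L lborel (F \<rho>) + integral\<^sup>L lborel (\<lambda>h. indicator {h. \<epsilon> \<le> norm h} h * S0 h) / 2)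
      \<longlongrightarrow> Lval) (at_right 0)"
    unfolding Lval_def by (intro tendsto_intros lim_S0) simp
  moreover have "eventually (\<lambda>\<epsilon>. integral\<^sup>L lborel (F \<rho>) + integral\<^sup>L lborel (\<lambda>h. indicator {h. \<epsilon> \<le> norm h} h * S0 h) / 2
      = Iq \<epsilon>) (at_right 0)"
  proof (subst eventually_at_right[OF rho_pos], intro exI[of _ \<rho>] conjI allI impI)
    show "0 < \<rho>" by (rule rho_pos)
    fix \<epsilon> :: real assume e: "0 < \<epsilon>" "\<epsilon> < \<rho>"
    have "Iq \<epsilon> = integral\<^sup>L lborel (\<lambda>h. F \<rho> h + psi \<epsilon> h)"
    proof -
      have "F \<epsilon> = (\<lambda>h. F \<rho> h + psi \<epsilon> h)"
        by (rule ext, rule F_split) (use e in simp)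
      then show ?thesis unfolding Iq_eq by simp
    qed
    also have "\<dots> = integral\<^sup>L lborel (F \<rho>) + integral\<^sup>L lborel (psi \<epsilon>)"
      by (rule Bochner_Integration.integral_add[OF F_int psi_int[OF e(1)]])
    finally show "integral\<^sup>L lborel (F \<rho>) + integral\<^sup>L lborel (\<lambda>h. indicator {h. \<epsilon> \<le> norm h} h * S0 h) / 2 = Iq \<epsilon>"
      using psi_sym[OF e(1)] by simp
  qed
  ultimately show ?thesis by (rule Lim_transform_eventually)
qed

end

definition KC :: "real \<Rightarrow> real \<Rightarrow> real \<Rightarrow> 'n::finite itself \<Rightarrow> real" where
 "KC B N \<gamma> t =
    B * 2 powr N * real CARD('n) * integral\<^sup>L lborel (\<lambda>h::real^'n. indicator {h. norm h < 1} h * norm h powr -(real CARD('n) - 1 + \<gamma>/2))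
  + B * 2 powr N * 2 powr (real CARD('n) + \<gamma>) * integral\<^sup>L lborel (\<lambda>h::real^'n. (1 + norm h) powr -(real CARD('n) + \<gamma>))
  + B * 2 powr (real CARD('n) + \<gamma>) * integral\<^sup>L lborel (\<lambda>h::real^'n. (1 + norm h) powr -(real CARD('n) + 1))
  + B * 2 powr N * real CARD('n)^2 * integral\<^sup>L lborel (\<lambda>h::real^'n. indicator {h. norm h < 1} h * norm h powr -(max 0 (real CARD('n) + \<gamma> - 2)))"

lemma le_mulQ: "0 \<le> (x::real) \<Longrightarrow> 1 \<le> Q \<Longrightarrow> x \<le> x * Q"
  using mult_left_mono[of 1 Q x] by simp

context fl_setting begin

lemma KC_eq: "KC B N \<gamma> TYPE('n) = B * 2 powr N * real CARD('n) * integral\<^sup>L lborel V1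
  + B * 2 powr N * 2 powr a * integral\<^sup>L lborel T1 + B * 2 powr a * integral\<^sup>L lborel T2
  + B * 2 powr N * real CARD('n)^2 * integral\<^sup>L lborel V2"
  unfolding KC_def V1_def[abs_def] V2_def[abs_def] T1_def[abs_def] T2_def[abs_def] a_def b1e_def b2e_def
  by simp

lemma Lval_bound: "\<bar>Lval\<bar> \<le> KC B N \<gamma> TYPE('n) * (1 + norm u) powr -a * (1 + \<bar>u$k\<bar> powr (-\<gamma>/2))"
proof -
  define P where "P = (1 + norm u) powr -a"
  define Q where "Q = 1 + \<bar>u$k\<bar> powr (-\<gamma>/2)"
  define R where "R = \<rho> powr (-\<gamma>/2)"
  define c1 where "c1 = integral\<^sup>L lborel V1"
  define c2 where "c2 = integral\<^sup>L lborel T1"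
  define c3 where "c3 = integral\<^sup>L lborel T2"
  define c4 where "c4 = integral\<^sup>L lborel V2"
  have c1: "0 \<le> c1" unfolding c1_def by (rule integral_nonneg_AE) (simp add: V1_nonneg)
  have c2: "0 \<le> c2" unfolding c2_def by (rule integral_nonneg_AE) (simp add: T1_nonneg)
  have c3: "0 \<le> c3" unfolding c3_def by (rule integral_nonneg_AE) (simp add: T2_nonneg)
  have c4: "0 \<le> c4" unfolding c4_def by (rule integral_nonneg_AE) (simp add: V2_nonneg)
  have P0: "0 \<le> P" by (simp add: P_def)
  have Q1: "1 \<le> Q" by (simp add: Q_def)
  have RQ: "R \<le> Q"
  proof (cases "\<bar>u$k\<bar> \<le> 1")
    case True
    then have "\<rho> = \<bar>u$k\<bar>" by (simp add: \<rho>_def)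
    then show ?thesis by (simp add: R_def Q_def)
  next
    case False
    then have "\<rho> = 1" by (simp add: \<rho>_def)
    then show ?thesis by (simp add: R_def Q_def)
  qed
  have MuX: "Mu \<le> B * 2 powr N * P"
  proof -
    have "(1 + norm u) powr -N \<le> (1 + norm u) powr -a"
      using Nge gam by (intro powr_mono) (auto simp: a_def)
    then show ?thesis unfolding Mu_def P_def using B_nonneg by (simp add: mult_left_mono)
  qed
  have c3s: "integral\<^sup>L lborel (\<lambda>h. T2 (u + h)) = c3"
    unfolding c3_def by (rule integral_shift_lborel[symmetric]) (simp add: T2_def[abs_def])
  have intW: "integral\<^sup>L lborel W = Mu * real CARD('n) * R * c1 + Mu * 2 powr a * c2 + B * 2 powr a * P * c3"
    unfolding W_def[abs_def] R_def c1_def c2_def P_def c3s[symmetric]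
    using V1_int T1_int T2s_int by simp
  have bF: "\<bar>integral\<^sup>L lborel (F \<rho>)\<bar> \<le> integral\<^sup>L lborel W"
    by (rule integral_abs_bound_integral[OF F_int W_int W_bound])
  have bS: "\<bar>integral\<^sup>L lborel S0\<bar> \<le> integral\<^sup>L lborel (\<lambda>h. 2 * Mu * real CARD('n)^2 * V2 h)"
    by (rule integral_abs_bound_integral[OF S0_int _ S0_bound]) (use V2_int in simp)
  have bS': "integral\<^sup>L lborel (\<lambda>h. 2 * Mu * real CARD('n)^2 * V2 h) = 2 * Mu * real CARD('n)^2 * c4"
    by (simp add: c4_def)
  have "\<bar>Lval\<bar> \<le> \<bar>integral\<^sup>L lborel (F \<rho>)\<bar> + \<bar>integral\<^sup>L lborel S0\<bar> / 2"
    unfolding Lval_def by (simp add: abs_triangle_ineq[THEN order.trans])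
  also have "\<dots> \<le> Mu * real CARD('n) * R * c1 + Mu * 2 powr a * c2 + B * 2 powr a * P * c3 + Mu * real CARD('n)^2 * c4"
  proof -
    have bS2: "\<bar>integral\<^sup>L lborel S0\<bar> / 2 \<le> Mu * real CARD('n)^2 * c4"
      using bS unfolding bS' by simp
    show ?thesis using bF bS2 intW by linarith
  qed
  also have "\<dots> \<le> (B * 2 powr N * P) * real CARD('n) * Q * c1 + (B * 2 powr N * P) * 2 powr a * Q * c2
       + B * 2 powr a * P * Q * c3 + (B * 2 powr N * P) * real CARD('n)^2 * Q * c4"
  proof -
    have X0: "0 \<le> B * 2 powr N * P" using B_nonneg P0 by simp
    have t1: "Mu * real CARD('n) * R * c1 \<le> (B * 2 powr N * P) * real CARD('n) * Q * c1"
      using MuX RQ Mu_nonneg c1 X0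
      by (intro mult_right_mono mult_mono) (auto simp: R_def)
    have t2: "Mu * 2 powr a * c2 \<le> (B * 2 powr N * P) * 2 powr a * Q * c2"
    proof -
      have "Mu * 2 powr a * c2 \<le> (B * 2 powr N * P) * 2 powr a * c2"
        using MuX c2 by (intro mult_right_mono) auto
      also have "\<dots> \<le> ((B * 2 powr N * P) * 2 powr a * c2) * Q"
        using Q1 X0 c2 by (intro le_mulQ) auto
      also have "\<dots> = (B * 2 powr N * P) * 2 powr a * Q * c2" by (simp add: ac_simps)
      finally show ?thesis .
    qed
    have t3: "B * 2 powr a * P * c3 \<le> B * 2 powr a * P * Q * c3"
    proof -
      have "0 \<le> B * 2 powr a * P * c3" using B_nonneg P0 c3 by simp
      then have "B * 2 powr a * P * c3 \<le> (B * 2 powr a * P * c3) * Q" using Q1 by (rule le_mulQ)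
      then show ?thesis by (simp add: ac_simps)
    qed
    have t4: "Mu * real CARD('n)^2 * c4 \<le> (B * 2 powr N * P) * real CARD('n)^2 * Q * c4"
    proof -
      have "Mu * real CARD('n)^2 * c4 \<le> (B * 2 powr N * P) * real CARD('n)^2 * c4"
        using MuX c4 by (intro mult_right_mono) auto
      also have "\<dots> \<le> ((B * 2 powr N * P) * real CARD('n)^2 * c4) * Q"
        using Q1 X0 c4 by (intro le_mulQ) auto
      also have "\<dots> = (B * 2 powr N * P) * real CARD('n)^2 * Q * c4" by (simp add: ac_simps)
      finally show ?thesis .
    qed
    show ?thesis using t1 t2 t3 t4 by linarith
  qed
  also have "\<dots> = KC B N \<gamma> TYPE('n) * P * Q"
    unfolding KC_eq c1_def[symmetric] c2_def[symmetric] c3_def[symmetric] c4_def[symmetric]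
    by (simp add: algebra_simps)
  finally show ?thesis by (simp add: P_def Q_def)
qed

end

context fl_setting begin
lemma summary:
  "\<exists>L. ((\<lambda>\<epsilon>. set_lebesgue_integral lborel ({v. 0 < \<sigma> * v$k} \<inter> {v. \<epsilon> \<le> norm (v - u)})
          (\<lambda>v. (g u - g v) / norm (v - u) powr (real CARD('n) + \<gamma>))) \<longlongrightarrow> L) (at_right 0)
     \<and> \<bar>L\<bar> \<le> KC B N \<gamma> TYPE('n) * (1 + norm u) powr -(real CARD('n) + \<gamma>) * (1 + \<bar>u$k\<bar> powr (-\<gamma>/2))"
proof -
  have "(Iq \<longlongrightarrow> Lval) (at_right 0)" by (rule main_lim)
  moreover have "Iq = (\<lambda>\<epsilon>. set_lebesgue_integral lborel ({v. 0 < \<sigma> * v$k} \<inter> {v. \<epsilon> \<le> norm (v - u)})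
          (\<lambda>v. (g u - g v) / norm (v - u) powr (real CARD('n) + \<gamma>)))"
    by (simp add: fun_eq_iff Iq_def DD_def a_def)
  ultimately show ?thesis using Lval_bound unfolding a_def by auto
qed
end

lemma bracket_ge:
  fixes f :: "real^'n::finite \<Rightarrow> real"
  assumes "length is \<le> j"
  shows "\<bar>pdl is f y\<bar> \<le> bracket j f y"
proof -
  have fin: "finite {is :: 'n list. length is = m}" for m
    using finite_lists_length_eq[of "UNIV :: 'n set" m] by simp
  have "\<bar>pdl is f y\<bar> \<le> (\<Sum>is'\<in>{is' :: 'n list. length is' = length is}. \<bar>pdl is' f y\<bar>)"
    by (rule member_le_sum) (auto intro: fin)
  also have "\<dots> \<le> (\<Sum>m\<le>j. \<Sum>is'\<in>{is' :: 'n list. length is' = m}. \<bar>pdl is' f y\<bar>)"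
    by (rule member_le_sum[where f="\<lambda>m. \<Sum>is'\<in>{is' :: 'n list. length is' = m}. \<bar>pdl is' f y\<bar>"])
       (use assms in \<open>auto intro: sum_nonneg\<close>)
  finally show ?thesis by (simp add: bracket_def)
qed

lemma one_plus_pow_le: "(1 + x) ^ n \<le> 2 ^ n * (1 + x ^ n)" if "0 \<le> (x::real)" for n
proof (cases "x \<le> 1")
  case True
  have "(1 + x) ^ n \<le> 2 ^ n" using True that by (intro power_mono) auto
  also have "\<dots> \<le> 2 ^ n * (1 + x ^ n)" using that by simp
  finally show ?thesis .
next
  case False
  have "(1 + x) ^ n \<le> (2 * x) ^ n" using False that by (intro power_mono) auto
  also have "\<dots> \<le> 2 ^ n * (1 + x ^ n)" using that by (simp add: power_mult_distrib)
  finally show ?thesis .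
qed

lemma S_k_good:
  fixes G :: "real \<Rightarrow> real^'n::finite \<Rightarrow> real" and n :: nat
  assumes "G \<in> S_k T 2"
  shows "\<exists>B. \<forall>s\<in>{0..T}. continuous_on UNIV (G s)
     \<and> (\<forall>i y. (\<lambda>t. G s (y + t *\<^sub>R axis i 1)) differentiable (at 0))
     \<and> (\<forall>i j y. (\<lambda>t. pd j (G s) (y + t *\<^sub>R axis i 1)) differentiable (at 0))
     \<and> (\<forall>y. \<bar>G s y\<bar> \<le> B * (1 + norm y) powr -real n)
     \<and> (\<forall>i y. \<bar>pd i (G s) y\<bar> \<le> B * (1 + norm y) powr -real n)
     \<and> (\<forall>i j y. \<bar>pd i (pd j (G s)) y\<bar> \<le> B * (1 + norm y) powr -real n)"
proof -
  from assms have cont0: "continuous_on ({0..} \<times> UNIV) (\<lambda>(s,u). G s u)"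
    and dif: "\<And>xs i s u. length xs < 2 \<Longrightarrow> s \<ge> 0 \<Longrightarrow> (\<lambda>t. pdl xs (G s) (u + t *\<^sub>R axis i 1)) differentiable (at 0)"
    and bdd: "\<And>r j. j \<le> 2 \<Longrightarrow> bdd_above ((\<lambda>(s,u). norm u ^ r * bracket j (G s) u) ` ({0..T} \<times> UNIV))"
    unfolding S_k_def by auto
  obtain B0 where B0: "\<And>s u. s \<in> {0..T} \<Longrightarrow> norm u ^ 0 * bracket 2 (G s) u \<le> B0"
    using bdd[of 2 0] unfolding bdd_above_def by fastforce
  obtain BN where BN: "\<And>s u. s \<in> {0..T} \<Longrightarrow> norm u ^ n * bracket 2 (G s) u \<le> BN"
    using bdd[of 2 n] unfolding bdd_above_def by fastforce
  define B where "B = 2 ^ n * (B0 + BN)"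
  have key: "bracket 2 (G s) y \<le> B * (1 + norm y) powr -real n" if s: "s \<in> {0..T}" for s y
  proof -
    have br0: "0 \<le> bracket 2 (G s) y" by (simp add: bracket_def sum_nonneg)
    have "(1 + norm y) ^ n * bracket 2 (G s) y \<le> 2 ^ n * (1 + norm y ^ n) * bracket 2 (G s) y"
      using one_plus_pow_le[of "norm y" n] br0 by (intro mult_right_mono) auto
    also have "\<dots> = 2 ^ n * (bracket 2 (G s) y + norm y ^ n * bracket 2 (G s) y)"
      by (simp add: algebra_simps)
    also have "\<dots> \<le> 2 ^ n * (B0 + BN)"
      using B0[OF s, of y] BN[OF s, of y] by (intro mult_left_mono add_mono) auto
    finally have "(1 + norm y) ^ n * bracket 2 (G s) y \<le> B" by (simp add: B_def)
    moreover have "(1 + norm y) powr -real n = 1 / (1 + norm y) ^ n"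
      by (simp add: powr_minus_divide powr_realpow)
    moreover have pp: "(1 + norm y) ^ n > 0" by simp
    ultimately have "bracket 2 (G s) y \<le> B / (1 + norm y) ^ n"
      by (simp add: le_divide_eq mult.commute)
    then show ?thesis using \<open>(1 + norm y) powr -real n = 1 / (1 + norm y) ^ n\<close> by simp
  qed
  have "\<forall>s\<in>{0..T}. continuous_on UNIV (G s)
     \<and> (\<forall>i y. (\<lambda>t. G s (y + t *\<^sub>R axis i 1)) differentiable (at 0))
     \<and> (\<forall>i j y. (\<lambda>t. pd j (G s) (y + t *\<^sub>R axis i 1)) differentiable (at 0))
     \<and> (\<forall>y. \<bar>G s y\<bar> \<le> B * (1 + norm y) powr -real n)
     \<and> (\<forall>i y. \<bar>pd i (G s) y\<bar> \<le> B * (1 + norm y) powr -real n)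
     \<and> (\<forall>i j y. \<bar>pd i (pd j (G s)) y\<bar> \<le> B * (1 + norm y) powr -real n)"
  proof (intro ballI conjI allI)
    fix s assume s: "s \<in> {0..T}"
    then have s0: "s \<ge> 0" by simp
    show "continuous_on UNIV (G s)"
    proof -
      have "continuous_on UNIV (\<lambda>u. (\<lambda>(s,u). G s u) (s, u))"
        by (rule continuous_on_compose2[OF cont0]) (use s0 in \<open>auto intro!: continuous_intros\<close>)
      then show ?thesis by simp
    qed
    show "(\<lambda>t. G s (y + t *\<^sub>R axis i 1)) differentiable (at 0)" for i y
      using dif[where xs="[]" and i=i and s=s and u=y] s0 by simp
    show "(\<lambda>t. pd j (G s) (y + t *\<^sub>R axis i 1)) differentiable (at 0)" for i j y
      using dif[where xs="[j]" and i=i and s=s and u=y] s0 by simp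
    show "\<bar>G s y\<bar> \<le> B * (1 + norm y) powr -real n" for y
      using bracket_ge[of "[]" 2 "G s" y] key[OF s, of y] by simp
    show "\<bar>pd i (G s) y\<bar> \<le> B * (1 + norm y) powr -real n" for i y
      using bracket_ge[of "[i]" 2 "G s" y] key[OF s, of y] by simp
    show "\<bar>pd i (pd j (G s)) y\<bar> \<le> B * (1 + norm y) powr -real n" for i j y
      using bracket_ge[of "[i,j]" 2 "G s" y] key[OF s, of y] by simp
  qed
  then show ?thesis by blast
qed


lemma fl_apply:
  fixes g :: "real^'n::finite \<Rightarrow> real"
  assumes "continuous_on UNIV g"
    "\<forall>i y. (\<lambda>t. g (y + t *\<^sub>R axis i 1)) differentiable (at 0)"
    "\<forall>i j y. (\<lambda>t. pd j g (y + t *\<^sub>R axis i 1)) differentiable (at 0)"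
    "\<forall>y. \<bar>g y\<bar> \<le> B * (1 + norm y) powr -N"
    "\<forall>i y. \<bar>pd i g y\<bar> \<le> B * (1 + norm y) powr -N"
    "\<forall>i j y. \<bar>pd i (pd j g) y\<bar> \<le> B * (1 + norm y) powr -N"
    "N \<ge> 2 * real CARD('n) + 3" "0 < \<gamma>" "\<gamma> < 2" "\<sigma> = 1 \<or> \<sigma> = -1" "0 < \<sigma> * u$k"
  shows "\<exists>L. ((\<lambda>\<epsilon>. set_lebesgue_integral lborel ({v. 0 < \<sigma> * v$k} \<inter> {v. \<epsilon> \<le> norm (v - u)})
          (\<lambda>v. (g u - g v) / norm (v - u) powr (real CARD('n) + \<gamma>))) \<longlongrightarrow> L) (at_right 0)
     \<and> \<bar>L\<bar> \<le> KC B N \<gamma> TYPE('n) * (1 + norm u) powr -(real CARD('n) + \<gamma>) * (1 + \<bar>u$k\<bar> powr (-\<gamma>/2))"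
proof -
  interpret fl_setting g B N \<gamma> \<sigma> k u
    by unfold_locales (use assms in auto)
  show ?thesis by (rule summary)
qed

lemma star_side:
  fixes G g :: "real^'n::finite \<Rightarrow> real"
  assumes lim: "((\<lambda>\<epsilon>. set_lebesgue_integral lborel (A \<inter> {v. \<epsilon> \<le> norm (v - u)})
          (\<lambda>v. (g u - g v) / norm (v - u) powr (real CARD('n) + \<gamma>))) \<longlongrightarrow> L) (at_right 0)"
    and agree: "\<And>v. v \<in> A \<Longrightarrow> G v = g v" and uA: "u \<in> A"
  shows "reg_frac_lap \<gamma> A G u = c_gamma \<gamma> TYPE('n) * L"
proof -
  have "(\<lambda>\<epsilon>. set_lebesgue_integral lborel (A \<inter> {v. norm (v - u) \<ge> \<epsilon>})
         (\<lambda>v. (G u - G v) / norm (v - u) powr (real CARD('n) + \<gamma>)))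
      = (\<lambda>\<epsilon>. set_lebesgue_integral lborel (A \<inter> {v. \<epsilon> \<le> norm (v - u)})
          (\<lambda>v. (g u - g v) / norm (v - u) powr (real CARD('n) + \<gamma>)))"
  proof (rule ext)
    fix \<epsilon> :: real
    show "set_lebesgue_integral lborel (A \<inter> {v. norm (v - u) \<ge> \<epsilon>})
         (\<lambda>v. (G u - G v) / norm (v - u) powr (real CARD('n) + \<gamma>))
      = set_lebesgue_integral lborel (A \<inter> {v. \<epsilon> \<le> norm (v - u)})
          (\<lambda>v. (g u - g v) / norm (v - u) powr (real CARD('n) + \<gamma>))"
      unfolding set_lebesgue_integral_def
      by (rule Bochner_Integration.integral_cong[OF refl]) (auto simp: indicator_def agree uA)
  qed
  then have "Lim (at_right 0) (\<lambda>\<epsilon>. set_lebesgue_integral lborel (A \<inter> {v. norm (v - u) \<ge> \<epsilon>})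
         (\<lambda>v. (G u - G v) / norm (v - u) powr (real CARD('n) + \<gamma>))) = L"
    using lim by (simp add: tendsto_Lim)
  then show ?thesis using uA by (simp add: reg_frac_lap_def)
qed

lemma weight_le:
  fixes u :: "real^'n::finite" and p :: real
  assumes "0 \<le> p"
  shows "(1 + norm u) powr -p \<le> (\<Prod>i\<in>UNIV. (1 + \<bar>u$i\<bar>) powr -(p / real CARD('n)))"
proof -
  have "(1 + norm u) powr -p = (\<Prod>i\<in>(UNIV::'n set). (1 + norm u) powr (-p / real CARD('n)))"
    by (rule powr_as_prod) simp
  also have "\<dots> \<le> (\<Prod>i\<in>UNIV. (1 + \<bar>u$i\<bar>) powr -(p / real CARD('n)))"
  proof (rule prod_mono, safe)
    fix i
    show "0 \<le> (1 + norm u) powr (-p / real CARD('n))" by simp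
    show "(1 + norm u) powr (-p / real CARD('n)) \<le> (1 + \<bar>u$i\<bar>) powr -(p / real CARD('n))"
      unfolding minus_divide_left using component_le_norm_cart[of u i] assms
      by (intro powr_mono2') (auto simp: divide_nonneg_pos)
  qed
  finally show ?thesis .
qed


lemma fk_int:
  fixes q \<gamma> :: real assumes q: "q > 1" and g: "0 < \<gamma>" "\<gamma> < 2"
  shows "integrable lborel (\<lambda>x::real. (1 + \<bar>x\<bar>) powr -q * (1 + \<bar>x\<bar> powr (-\<gamma>/2)))"
proof (rule int_dom)
  show "integrable lborel (\<lambda>x::real. 2 * (1 + \<bar>x\<bar>) powr -q + indicator {-1..1} x * \<bar>x\<bar> powr -(\<gamma>/2))"
    using int_1d_tail[OF q] int_1d_sing[of "\<gamma>/2"] g by simp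
  show "(\<lambda>x::real. (1 + \<bar>x\<bar>) powr -q * (1 + \<bar>x\<bar> powr (-\<gamma>/2))) \<in> borel_measurable lborel" by measurable
  fix x :: real
  have A1: "(1 + \<bar>x\<bar>) powr -q \<le> 1"
    using powr_mono[of "-q" 0 "1 + \<bar>x\<bar>"] q by (simp split: if_splits; linarith)
  have A0: "0 \<le> (1 + \<bar>x\<bar>) powr -q" by simp
  have "(1 + \<bar>x\<bar>) powr -q * \<bar>x\<bar> powr (-\<gamma>/2) \<le> (1 + \<bar>x\<bar>) powr -q + indicator {-1..1} x * \<bar>x\<bar> powr -(\<gamma>/2)"
  proof (cases "\<bar>x\<bar> \<le> 1")
    case True
    then have "(1 + \<bar>x\<bar>) powr -q * \<bar>x\<bar> powr (-\<gamma>/2) \<le> 1 * \<bar>x\<bar> powr (-\<gamma>/2)"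
      using A1 by (intro mult_right_mono) auto
    moreover have ind: "indicator {-1..1} x = (1::real)" using True by (auto simp: indicator_def abs_le_iff)
    ultimately show ?thesis unfolding ind minus_divide_left using A0 by linarith
  next
    case False
    then have "\<bar>x\<bar> powr (-\<gamma>/2) \<le> 1" using g powr_mono[of "-\<gamma>/2" 0 "\<bar>x\<bar>"] by (simp split: if_splits)
    then have "(1 + \<bar>x\<bar>) powr -q * \<bar>x\<bar> powr (-\<gamma>/2) \<le> (1 + \<bar>x\<bar>) powr -q * 1"
      using A0 by (intro mult_left_mono) auto
    moreover have ind: "indicator {-1..1} x = (0::real)" using False by (auto simp: indicator_def abs_le_iff)
    ultimately show ?thesis unfolding ind by simp
  qed
  then show "\<bar>(1 + \<bar>x\<bar>) powr -q * (1 + \<bar>x\<bar> powr (-\<gamma>/2))\<bar> \<le> 2 * (1 + \<bar>x\<bar>) powr -q + indicator {-1..1} x * \<bar>x\<bar> powr -(\<gamma>/2)"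
    by (simp add: algebra_simps)
qed

theorem mainTheorem11:
  fixes T \<gamma> :: real and k :: "'n::finite" and G :: "real \<Rightarrow> real^'n \<Rightarrow> real"
  assumes "T > 0" and "0 < \<gamma>" and "\<gamma> < 2"
    and "G \<in> S_gamma_0 T \<gamma> k"
  shows "\<exists>H :: real^'n \<Rightarrow> real. \<exists>C > 0. integrable lborel H \<and>
           (\<forall>u. \<forall>s\<in>{0..T}. \<bar>star_frac_lap \<gamma> k (G s) u\<bar> \<le> H u) \<and>
           (\<forall>u. u $ k \<noteq> 0 \<longrightarrow> H u \<le> C * (1 + \<bar>u $ k\<bar> powr (- \<gamma> / 2)))"
proof -
  from assms(4) obtain Gm Gp where Gm: "Gm \<in> S_gamma T \<gamma>" and Gp: "Gp \<in> S_gamma T \<gamma>"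
    and Geq: "\<And>s u. s \<in> {0..T} \<Longrightarrow> G s u = (if u $ k < 0 then Gm s u else Gp s u)"
    unfolding S_gamma_0_def by blast
  have Sk: "S_gamma T \<gamma> \<subseteq> (S_k T 2 :: (real \<Rightarrow> real^'n \<Rightarrow> real) set)"
    unfolding S_gamma_def S_k_c_def by auto
  define n :: nat where "n = 2 * CARD('n) + 3"
  have Nge: "real n \<ge> 2 * real CARD('n) + 3" by (simp add: n_def)
  obtain Bm where Bm: "\<forall>s\<in>{0..T}. continuous_on UNIV (Gm s)
     \<and> (\<forall>i y. (\<lambda>t. Gm s (y + t *\<^sub>R axis i 1)) differentiable (at 0))
     \<and> (\<forall>i j y. (\<lambda>t. pd j (Gm s) (y + t *\<^sub>R axis i 1)) differentiable (at 0))
     \<and> (\<forall>y. \<bar>Gm s y\<bar> \<le> Bm * (1 + norm y) powr -real n)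
     \<and> (\<forall>i y. \<bar>pd i (Gm s) y\<bar> \<le> Bm * (1 + norm y) powr -real n)
     \<and> (\<forall>i j y. \<bar>pd i (pd j (Gm s)) y\<bar> \<le> Bm * (1 + norm y) powr -real n)"
    using S_k_good[of Gm T n] Gm Sk by blast
  obtain Bp where Bp: "\<forall>s\<in>{0..T}. continuous_on UNIV (Gp s)
     \<and> (\<forall>i y. (\<lambda>t. Gp s (y + t *\<^sub>R axis i 1)) differentiable (at 0))
     \<and> (\<forall>i j y. (\<lambda>t. pd j (Gp s) (y + t *\<^sub>R axis i 1)) differentiable (at 0))
     \<and> (\<forall>y. \<bar>Gp s y\<bar> \<le> Bp * (1 + norm y) powr -real n)
     \<and> (\<forall>i y. \<bar>pd i (Gp s) y\<bar> \<le> Bp * (1 + norm y) powr -real n)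
     \<and> (\<forall>i j y. \<bar>pd i (pd j (Gp s)) y\<bar> \<le> Bp * (1 + norm y) powr -real n)"
    using S_k_good[of Gp T n] Gp Sk by blast
  define B where "B = max Bm Bp"
  have le_B: "X * (1 + norm y) powr -real n \<le> B * (1 + norm y) powr -real n" if "X = Bm \<or> X = Bp"
    for X and y :: "real^'n"
    using that by (intro mult_right_mono) (auto simp: B_def)
  define c where "c = c_gamma \<gamma> TYPE('n)"
  define K where "K = KC B (real n) \<gamma> TYPE('n)"
  define q where "q = (real CARD('n) + \<gamma>) / real CARD('n)"
  have q1: "q > 1" using assms(2) by (simp add: q_def field_simps)
  define f where "f i x = (1 + \<bar>x\<bar>) powr -q * (if i = k then 1 + \<bar>x\<bar> powr (-\<gamma>/2) else 1)" for i x
  define H where "H u = \<bar>c\<bar> * \<bar>K\<bar> * (\<Prod>i\<in>UNIV. f i (u$i))" for u :: "real^'n"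
  have Hform: "H u = \<bar>c\<bar> * \<bar>K\<bar> * (\<Prod>i\<in>UNIV. (1 + \<bar>u$i\<bar>) powr -q) * (1 + \<bar>u$k\<bar> powr (-\<gamma>/2))" for u
    by (simp add: H_def f_def prod.distrib)
  have Pw: "(1 + norm u) powr -(real CARD('n) + \<gamma>) \<le> (\<Prod>i\<in>UNIV. (1 + \<bar>u$i\<bar>) powr -q)" for u :: "real^'n"
    unfolding q_def by (rule weight_le) (use assms(2) in simp)
  have Q0: "0 \<le> 1 + \<bar>u$k\<bar> powr (-\<gamma>/2)" for u :: "real^'n" by (simp add: add_nonneg_nonneg)
  have Hnn: "0 \<le> H u" for u by (simp add: Hform prod_nonneg)
  have side: "\<bar>c * L\<bar> \<le> H u"
    if "\<bar>L\<bar> \<le> K * (1 + norm u) powr -(real CARD('n) + \<gamma>) * (1 + \<bar>u$k\<bar> powr (-\<gamma>/2))" for L u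
  proof -
    have "\<bar>c * L\<bar> = \<bar>c\<bar> * \<bar>L\<bar>" by (simp add: abs_mult)
    also have "\<dots> \<le> \<bar>c\<bar> * (K * (1 + norm u) powr -(real CARD('n) + \<gamma>) * (1 + \<bar>u$k\<bar> powr (-\<gamma>/2)))"
      using that by (intro mult_left_mono) auto
    also have "\<dots> \<le> \<bar>c\<bar> * (\<bar>K\<bar> * (\<Prod>i\<in>UNIV. (1 + \<bar>u$i\<bar>) powr -q) * (1 + \<bar>u$k\<bar> powr (-\<gamma>/2)))"
      using Pw[of u] Q0[of u]
      by (intro mult_left_mono mult_right_mono mult_mono) auto
    also have "\<dots> = H u" by (simp add: Hform mult.assoc)
    finally show ?thesis .
  qed
  show ?thesis
  proof (intro exI[of _ H] exI[of _ "\<bar>c\<bar> * \<bar>K\<bar> + 1"] conjI allI ballI impI)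
    show "\<bar>c\<bar> * \<bar>K\<bar> + 1 > 0" by (simp add: add_nonneg_pos)
    show "integrable lborel H"
    proof -
      have "integrable lborel (\<lambda>u::real^'n. \<Prod>i\<in>UNIV. f i (u$i))"
      proof (rule prod_integrable_vec)
        fix i
        show "integrable lborel (f i)"
        proof (cases "i = k")
          case True
          then show ?thesis unfolding f_def using fk_int[OF q1 assms(2,3)] by simp
        next
          case False
          then show ?thesis unfolding f_def using int_1d_tail[OF q1] by simp
        qed
      qed
      then show ?thesis unfolding H_def by simp
    qed
  next
    fix u :: "real^'n"
    assume "u $ k \<noteq> 0"
    have "(\<Prod>i\<in>UNIV. (1 + \<bar>u$i\<bar>) powr -q) \<le> 1"
    proof (rule prod_le_1)
      fix i :: 'n
      have "(1 + \<bar>u$i\<bar>) powr -q \<le> (1 + \<bar>u$i\<bar>) powr 0" using q1 by (intro powr_mono) auto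
      moreover have "1 + \<bar>u$i\<bar> \<noteq> 0" using abs_ge_zero[of "u$i"] by linarith
      ultimately show "0 \<le> (1 + \<bar>u$i\<bar>) powr -q \<and> (1 + \<bar>u$i\<bar>) powr -q \<le> 1" by simp
    qed
    then have "H u \<le> \<bar>c\<bar> * \<bar>K\<bar> * 1 * (1 + \<bar>u$k\<bar> powr (-\<gamma>/2))"
      unfolding Hform using Q0[of u] by (intro mult_right_mono mult_left_mono) auto
    also have "\<dots> \<le> (\<bar>c\<bar> * \<bar>K\<bar> + 1) * (1 + \<bar>u$k\<bar> powr (-\<gamma>/2))"
      using Q0[of u] by (intro mult_right_mono) auto
    finally show "H u \<le> (\<bar>c\<bar> * \<bar>K\<bar> + 1) * (1 + \<bar>u $ k\<bar> powr (- \<gamma> / 2))" .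
  next
    fix u :: "real^'n" and s :: real
    assume s: "s \<in> {0..T}"
    consider "u$k = 0" | "u$k > 0" | "u$k < 0" by linarith
    then show "\<bar>star_frac_lap \<gamma> k (G s) u\<bar> \<le> H u"
    proof cases
      case 1
      then show ?thesis using Hnn[of u] by (simp add: star_frac_lap_def reg_frac_lap_def)
    next
      case 2
      obtain L where lim: "((\<lambda>\<epsilon>. set_lebesgue_integral lborel ({v. 0 < 1 * v$k} \<inter> {v. \<epsilon> \<le> norm (v - u)})
          (\<lambda>v. (Gp s u - Gp s v) / norm (v - u) powr (real CARD('n) + \<gamma>))) \<longlongrightarrow> L) (at_right 0)"
        and Lb: "\<bar>L\<bar> \<le> KC B (real n) \<gamma> TYPE('n) * (1 + norm u) powr -(real CARD('n) + \<gamma>) * (1 + \<bar>u$k\<bar> powr (-\<gamma>/2))"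
      proof -
        from Bp s have cp: "continuous_on UNIV (Gp s)"
          and d1: "\<forall>i y. (\<lambda>t. Gp s (y + t *\<^sub>R axis i 1)) differentiable (at 0)"
          and d2: "\<forall>i j y. (\<lambda>t. pd j (Gp s) (y + t *\<^sub>R axis i 1)) differentiable (at 0)"
          and e0: "\<forall>y. \<bar>Gp s y\<bar> \<le> Bp * (1 + norm y) powr -real n"
          and e1: "\<forall>i y. \<bar>pd i (Gp s) y\<bar> \<le> Bp * (1 + norm y) powr -real n"
          and e2: "\<forall>i j y. \<bar>pd i (pd j (Gp s)) y\<bar> \<le> Bp * (1 + norm y) powr -real n"
          by auto
        have f0: "\<forall>y. \<bar>Gp s y\<bar> \<le> B * (1 + norm y) powr -real n"
          using e0 le_B[of Bp] by (blast intro: order.trans)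
        have f1: "\<forall>i y. \<bar>pd i (Gp s) y\<bar> \<le> B * (1 + norm y) powr -real n"
          using e1 le_B[of Bp] by (blast intro: order.trans)
        have f2: "\<forall>i j y. \<bar>pd i (pd j (Gp s)) y\<bar> \<le> B * (1 + norm y) powr -real n"
          using e2 le_B[of Bp] by (blast intro: order.trans)
        have sg: "(1::real) = 1 \<or> (1::real) = -1" by simp
        have uD: "0 < 1 * u$k" using 2 by simp
        show ?thesis using fl_apply[OF cp d1 d2 f0 f1 f2 Nge assms(2,3) sg uD] that by blast
      qed
      have r1: "reg_frac_lap \<gamma> {v. v $ k > 0} (G s) u = c * L"
        unfolding c_def by (rule star_side) (use lim 2 in \<open>auto simp: Geq[OF s]\<close>)
      have r0: "reg_frac_lap \<gamma> {v. v $ k < 0} (G s) u = 0"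
        using 2 by (simp add: reg_frac_lap_def)
      show ?thesis unfolding star_frac_lap_def r1 r0 using side[OF Lb[folded K_def]] by simp
    next
      case 3
      obtain L where lim: "((\<lambda>\<epsilon>. set_lebesgue_integral lborel ({v. 0 < (-1) * v$k} \<inter> {v. \<epsilon> \<le> norm (v - u)})
          (\<lambda>v. (Gm s u - Gm s v) / norm (v - u) powr (real CARD('n) + \<gamma>))) \<longlongrightarrow> L) (at_right 0)"
        and Lb: "\<bar>L\<bar> \<le> KC B (real n) \<gamma> TYPE('n) * (1 + norm u) powr -(real CARD('n) + \<gamma>) * (1 + \<bar>u$k\<bar> powr (-\<gamma>/2))"
      proof -
        from Bm s have cp: "continuous_on UNIV (Gm s)"
          and d1: "\<forall>i y. (\<lambda>t. Gm s (y + t *\<^sub>R axis i 1)) differentiable (at 0)"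
          and d2: "\<forall>i j y. (\<lambda>t. pd j (Gm s) (y + t *\<^sub>R axis i 1)) differentiable (at 0)"
          and e0: "\<forall>y. \<bar>Gm s y\<bar> \<le> Bm * (1 + norm y) powr -real n"
          and e1: "\<forall>i y. \<bar>pd i (Gm s) y\<bar> \<le> Bm * (1 + norm y) powr -real n"
          and e2: "\<forall>i j y. \<bar>pd i (pd j (Gm s)) y\<bar> \<le> Bm * (1 + norm y) powr -real n"
          by auto
        have f0: "\<forall>y. \<bar>Gm s y\<bar> \<le> B * (1 + norm y) powr -real n"
          using e0 le_B[of Bm] by (blast intro: order.trans)
        have f1: "\<forall>i y. \<bar>pd i (Gm s) y\<bar> \<le> B * (1 + norm y) powr -real n"
          using e1 le_B[of Bm] by (blast intro: order.trans)
        have f2: "\<forall>i j y. \<bar>pd i (pd j (Gm s)) y\<bar> \<le> B * (1 + norm y) powr -real n"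
          using e2 le_B[of Bm] by (blast intro: order.trans)
        have sg: "(-1::real) = 1 \<or> (-1::real) = -1" by simp
        have uD: "0 < (-1) * u$k" using 3 by simp
        show ?thesis using fl_apply[OF cp d1 d2 f0 f1 f2 Nge assms(2,3) sg uD] that by blast
      qed
      have sets: "{v::real^'n. 0 < (-1) * v$k} = {v. v $ k < 0}" by auto
      have r1: "reg_frac_lap \<gamma> {v. v $ k < 0} (G s) u = c * L"
        unfolding c_def by (rule star_side) (use lim 3 in \<open>auto simp: Geq[OF s] sets\<close>)
      have r0: "reg_frac_lap \<gamma> {v. v $ k > 0} (G s) u = 0"
        using 3 by (simp add: reg_frac_lap_def)
      show ?thesis unfolding star_frac_lap_def r1 r0 using side[OF Lb[folded K_def]] by simp
    qed
  qed
qed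


end
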